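(* Let $\mathcal{M}=(F,+,\cdot,0,1,\dots)$ be a pseudofinite field with possibly extra structure, and let $\pmb{\delta}_F$ be the coarse pseudofinite dimension normalised by $|F|$. Suppose that for every formula $\varphi(x,y)$ with $|x|=1$ and every $b\in F^{|y|}$, $\pmb{\delta}_F(\varphi(x,b))\in\{0,1\}$. Then $\pmb{\delta}_F$ is definable, and for every formula $\psi(x,y)$ and every $c\in F^{|y|}$, $\pmb{\delta}_F(\psi(x,c))\in\{0,\dots,|x|\}$.
   Context: $\mathcal{M}$ is an infinite ultraproduct of finite structures whose reduct to the ring language is a field. For internal $D=\prod D_i/\mathcal{U}$, $|D|=(|D_i|)/\mathcal{U}\in\mathbb{R}^*$; for definable $A$, $\pmb{\delta}_F(A)=\mathrm{st}(\log|A|/\log|F|)$. $\pmb{\delta}_F$ is definable if (i) for every parameter-free $\phi(x,y)$ and reals $r_1<r_2$ there is a $\emptyset$-definable $D$ with $\{a:\pmb{\delta}_F(\phi(x,a))\le r_1\}\subseteq D\subseteq\{a:\pmb{\delta}_F(\phi(x,a))<r_2\}$, and (ii) $\{\pmb{\delta}_F(\phi(x,a)):a\}$ is finite for every parameter-free $\phi(x,y)$. *)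

theory Defs
  imports Complex_Main "HOL-Library.Extended_Real" "HOL-Algebra.Ring"
begin

datatype 'f fsym = Add | Mul | Zero | One | FExtra 'f

fun fsym_arity :: "('f \<Rightarrow> nat) \<Rightarrow> 'f fsym \<Rightarrow> nat" where
  "fsym_arity arf Add = 2"
| "fsym_arity arf Mul = 2"
| "fsym_arity arf Zero = 0"
| "fsym_arity arf One = 0"
| "fsym_arity arf (FExtra f) = arf f"

datatype 'f tm = Var nat | Fn "'f fsym" "'f tm list"

datatype ('f, 'r) fm =
    Eq "'f tm" "'f tm"
  | Rel 'r "'f tm list"
  | Neg "('f, 'r) fm"
  | Conj "('f, 'r) fm" "('f, 'r) fm"
  | Ex nat "('f, 'r) fm"

fun wf_tm :: "('f \<Rightarrow> nat) \<Rightarrow> 'f tm \<Rightarrow> bool" where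
  "wf_tm arf (Var v) = True"
| "wf_tm arf (Fn f ts) = (length ts = fsym_arity arf f \<and> (\<forall>t\<in>set ts. wf_tm arf t))"

fun wf_fm :: "('f \<Rightarrow> nat) \<Rightarrow> ('r \<Rightarrow> nat) \<Rightarrow> ('f, 'r) fm \<Rightarrow> bool" where
  "wf_fm arf arr (Eq s t) = (wf_tm arf s \<and> wf_tm arf t)"
| "wf_fm arf arr (Rel r ts) = (length ts = arr r \<and> (\<forall>t\<in>set ts. wf_tm arf t))"
| "wf_fm arf arr (Neg p) = wf_fm arf arr p"
| "wf_fm arf arr (Conj p q) = (wf_fm arf arr p \<and> wf_fm arf arr q)"
| "wf_fm arf arr (Ex v p) = wf_fm arf arr p"

fun fv_tm :: "'f tm \<Rightarrow> nat set" where
  "fv_tm (Var v) = {v}"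
| "fv_tm (Fn f ts) = (\<Union>t\<in>set ts. fv_tm t)"

fun fv :: "('f, 'r) fm \<Rightarrow> nat set" where
  "fv (Eq s t) = fv_tm s \<union> fv_tm t"
| "fv (Rel r ts) = (\<Union>t\<in>set ts. fv_tm t)"
| "fv (Neg p) = fv p"
| "fv (Conj p q) = fv p \<union> fv q"
| "fv (Ex v p) = fv p - {v}"

record ('a, 'f, 'r) struct =
  univ :: "'a set"
  fint :: "'f fsym \<Rightarrow> 'a list \<Rightarrow> 'a"
  rint :: "'r \<Rightarrow> 'a list \<Rightarrow> bool"

definition wf_struct :: "('f \<Rightarrow> nat) \<Rightarrow> ('a, 'f, 'r) struct \<Rightarrow> bool" where
  "wf_struct arf S \<longleftrightarrow> univ S \<noteq> {} \<and>
     (\<forall>f as. length as = fsym_arity arf f \<and> set as \<subseteq> univ S \<longrightarrow> fint S f as \<in> univ S)"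

fun eval_tm :: "('a, 'f, 'r) struct \<Rightarrow> (nat \<Rightarrow> 'a) \<Rightarrow> 'f tm \<Rightarrow> 'a" where
  "eval_tm S e (Var v) = e v"
| "eval_tm S e (Fn f ts) = fint S f (map (eval_tm S e) ts)"

fun sat :: "('a, 'f, 'r) struct \<Rightarrow> (nat \<Rightarrow> 'a) \<Rightarrow> ('f, 'r) fm \<Rightarrow> bool" where
  "sat S e (Eq s t) = (eval_tm S e s = eval_tm S e t)"
| "sat S e (Rel r ts) = rint S r (map (eval_tm S e) ts)"
| "sat S e (Neg p) = (\<not> sat S e p)"
| "sat S e (Conj p q) = (sat S e p \<and> sat S e q)"
| "sat S e (Ex v p) = (\<exists>a\<in>univ S. sat S (e(v := a)) p)"

definition asg :: "'a list \<Rightarrow> nat \<Rightarrow> 'a" where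
  "asg xs v = xs ! v"

definition ring_reduct :: "('a, 'f, 'r) struct \<Rightarrow> 'a ring" where
  "ring_reduct S = \<lparr>carrier = univ S, monoid.mult = (\<lambda>a b. fint S Mul [a, b]),
      one = fint S One [], zero = fint S Zero [], add = (\<lambda>a b. fint S Add [a, b])\<rparr>"

text \<open>A formula phi(x,y) with |x| = n, |y| = m: its free variables are among 0..n+m-1,
  the first n being x and the next m being y.  Its realisations in S with parameters bs:\<close>
definition realis :: "('a, 'f, 'r) struct \<Rightarrow> ('f, 'r) fm \<Rightarrow> nat \<Rightarrow> 'a list \<Rightarrow> 'a list set" where
  "realis S phi n bs = {xs. length xs = n \<and> set xs \<subseteq> univ S \<and> sat S (asg (xs @ bs)) phi}"

definition is_fm :: "('f \<Rightarrow> nat) \<Rightarrow> ('r \<Rightarrow> nat) \<Rightarrow> nat \<Rightarrow> ('f, 'r) fm \<Rightarrow> bool" where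
  "is_fm arf arr k phi \<longleftrightarrow> wf_fm arf arr phi \<and> fv phi \<subseteq> {..<k}"

definition ultrafilter :: "'i filter \<Rightarrow> bool" where
  "ultrafilter U \<longleftrightarrow> U \<noteq> bot \<and> (\<forall>P. eventually P U \<or> eventually (\<lambda>i. \<not> P i) U)"

text \<open>An m-tuple of the ultraproduct M = prod M_i / U, represented by a family b of
  m-tuples of the factors (almost everywhere).\<close>
definition up_tuple :: "'i filter \<Rightarrow> ('i \<Rightarrow> ('a, 'f, 'r) struct) \<Rightarrow> nat \<Rightarrow> ('i \<Rightarrow> 'a list) \<Rightarrow> bool" where
  "up_tuple U M m b \<longleftrightarrow> eventually (\<lambda>i. length (b i) = m \<and> set (b i) \<subseteq> univ (M i)) U"

text \<open>Satisfaction in the ultraproduct (Los): M |= chi(b) iff U-almost all M_i |= chi(b_i).\<close>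
definition up_sat :: "'i filter \<Rightarrow> ('i \<Rightarrow> ('a, 'f, 'r) struct) \<Rightarrow> ('f, 'r) fm \<Rightarrow> ('i \<Rightarrow> 'a list) \<Rightarrow> bool" where
  "up_sat U M chi b \<longleftrightarrow> eventually (\<lambda>i. sat (M i) (asg (b i)) chi) U"

text \<open>The definable set phi(M, b) = prod phi(M_i, b_i) / U is internal; it is nonempty iff
  U-almost all factors are nonempty.  Its coarse dimension normalised by |F|:
  delta(phi(x,b)) = st(log|phi(M,b)| / log|F|), computed as the U-limit of the
  standard ratios; delta of the empty set is -infinity.\<close>
definition up_nonempty :: "'i filter \<Rightarrow> ('i \<Rightarrow> ('a, 'f, 'r) struct) \<Rightarrow> ('f, 'r) fm \<Rightarrow> nat \<Rightarrow> ('i \<Rightarrow> 'a list) \<Rightarrow> bool" where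
  "up_nonempty U M phi n b \<longleftrightarrow> eventually (\<lambda>i. realis (M i) phi n (b i) \<noteq> {}) U"

definition delta :: "'i filter \<Rightarrow> ('i \<Rightarrow> ('a, 'f, 'r) struct) \<Rightarrow> ('f, 'r) fm \<Rightarrow> nat \<Rightarrow> ('i \<Rightarrow> 'a list) \<Rightarrow> ereal" where
  "delta U M phi n b =
     (if up_nonempty U M phi n b
      then ereal (Lim U (\<lambda>i. ln (real (card (realis (M i) phi n (b i)))) / ln (real (card (univ (M i))))))
      else -\<infinity>)"

text \<open>Definability of delta, clauses (i) and (ii) of the context.  phi(x,y) is a
  parameter-free formula with |x| = n, |y| = m; the 0-definable set D of m-tuples is
  given by a parameter-free formula chi(y) with free variables among 0..m-1.\<close>
definition delta_definable :: "('f \<Rightarrow> nat) \<Rightarrow> ('r \<Rightarrow> nat) \<Rightarrow> 'i filter \<Rightarrow> ('i \<Rightarrow> ('a, 'f, 'r) struct) \<Rightarrow> bool" where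
  "delta_definable arf arr U M \<longleftrightarrow>
     (\<forall>n m phi. is_fm arf arr (n + m) phi \<longrightarrow>
        (\<forall>r1 r2 :: real. r1 < r2 \<longrightarrow>
           (\<exists>chi. is_fm arf arr m chi \<and>
              (\<forall>b. up_tuple U M m b \<longrightarrow>
                   (delta U M phi n b \<le> ereal r1 \<longrightarrow> up_sat U M chi b) \<and>
                   (up_sat U M chi b \<longrightarrow> delta U M phi n b < ereal r2)))) \<and>
        finite {delta U M phi n b | b. up_tuple U M m b})"

end

theory Submission
  imports Defs
begin


fun rename_tm :: "(nat \<Rightarrow> nat) \<Rightarrow> 'f tm \<Rightarrow> 'f tm" where
  "rename_tm \<rho> (Var v) = Var (\<rho> v)"
| "rename_tm \<rho> (Fn f ts) = Fn f (map (rename_tm \<rho>) ts)"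

fun rename :: "(nat \<Rightarrow> nat) \<Rightarrow> ('f, 'r) fm \<Rightarrow> ('f, 'r) fm" where
  "rename \<rho> (Eq s t) = Eq (rename_tm \<rho> s) (rename_tm \<rho> t)"
| "rename \<rho> (Rel r ts) = Rel r (map (rename_tm \<rho>) ts)"
| "rename \<rho> (Neg p) = Neg (rename \<rho> p)"
| "rename \<rho> (Conj p q) = Conj (rename \<rho> p) (rename \<rho> q)"
| "rename \<rho> (Ex v p) = Ex (\<rho> v) (rename \<rho> p)"

lemma eval_rename_tm: "eval_tm S e (rename_tm \<rho> t) = eval_tm S (e \<circ> \<rho>) t"
  by (induction t) (auto intro!: arg_cong[where f="fint S _"])

lemma sat_rename: "inj \<rho> \<Longrightarrow> sat S e (rename \<rho> p) = sat S (e \<circ> \<rho>) p"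
proof (induction p arbitrary: e)
  case (Ex v p)
  have eq: "\<And>a. (e(\<rho> v := a)) \<circ> \<rho> = (e \<circ> \<rho>)(v := a)"
    using Ex.prems by (auto simp: fun_eq_iff inj_eq)
  have "sat S e (rename \<rho> (Ex v p)) = (\<exists>a\<in>univ S. sat S (e(\<rho> v := a)) (rename \<rho> p))" by simp
  also have "\<dots> = (\<exists>a\<in>univ S. sat S ((e(\<rho> v := a)) \<circ> \<rho>) p)" using Ex.IH[OF Ex.prems] by blast
  also have "\<dots> = (\<exists>a\<in>univ S. sat S ((e \<circ> \<rho>)(v := a)) p)" by (simp only: eq)
  also have "\<dots> = sat S (e \<circ> \<rho>) (Ex v p)" by (simp only: sat.simps)
  finally show ?case .
next
  case (Eq s t) show ?case by (simp add: eval_rename_tm comp_def)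
next
  case (Rel r ts)
  have "map (eval_tm S e) (map (rename_tm \<rho>) ts) = map (eval_tm S (e \<circ> \<rho>)) ts"
    by (simp add: eval_rename_tm)
  then show ?case by (simp only: rename.simps sat.simps)
next
  case (Neg p) show ?case using Neg.IH[OF Neg.prems] by simp
next
  case (Conj p q) show ?case using Conj.IH(1)[OF Conj.prems] Conj.IH(2)[OF Conj.prems] by simp
qed

lemma wf_rename_tm: "wf_tm arf (rename_tm \<rho> t) = wf_tm arf t"
  by (induction t) auto

lemma wf_rename: "wf_fm arf arr (rename \<rho> p) = wf_fm arf arr p"
  by (induction p) (auto simp: wf_rename_tm)

lemma fv_rename_tm: "fv_tm (rename_tm \<rho> t) = \<rho> ` fv_tm t"
  by (induction t) auto

lemma fv_rename: "inj \<rho> \<Longrightarrow> fv (rename \<rho> p) = \<rho> ` fv p"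
  by (induction p) (auto simp: fv_rename_tm inj_eq)

lemma eval_tm_cong: "(\<And>v. v \<in> fv_tm t \<Longrightarrow> e v = e' v) \<Longrightarrow> eval_tm S e t = eval_tm S e' t"
proof (induction t)
  case (Fn f ts)
  have "map (eval_tm S e) ts = map (eval_tm S e') ts"
    by (rule map_cong[OF refl]) (use Fn in auto)
  then show ?case by (simp only: eval_tm.simps)
qed simp

lemma sat_cong: "(\<And>v. v \<in> fv p \<Longrightarrow> e v = e' v) \<Longrightarrow> sat S e p = sat S e' p"
proof (induction p arbitrary: e e')
  case (Eq s t) then show ?case using eval_tm_cong[of s e e' S] eval_tm_cong[of t e e' S] by auto
next
  case (Rel r ts)
  have "map (eval_tm S e) ts = map (eval_tm S e') ts"
    by (rule map_cong[OF refl], rule eval_tm_cong) (use Rel in auto)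
  then show ?case by (simp only: sat.simps)
next
  case (Ex v p)
  have "\<And>a. sat S (e(v := a)) p = sat S (e'(v := a)) p"
    by (rule Ex.IH) (use Ex.prems in auto)
  then show ?case by (simp only: sat.simps)
next
  case (Neg p)
  have "sat S e p = sat S e' p" by (rule Neg.IH) (use Neg.prems in simp)
  then show ?case by simp
next
  case (Conj p q)
  have "sat S e p = sat S e' p" by (rule Conj.IH(1)) (use Conj.prems in simp)
  moreover have "sat S e q = sat S e' q" by (rule Conj.IH(2)) (use Conj.prems in simp)
  ultimately show ?case by simp
qed

definition rh :: "nat \<Rightarrow> nat \<Rightarrow> nat \<Rightarrow> nat" where
  "rh N v k = (if k = 0 then v else if k \<le> N then k - 1 else if k = v then N else k)"

lemma inj_rh: "N \<le> v \<Longrightarrow> inj (rh N v)"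
  unfolding inj_def rh_def by auto

lemma fv_rh: "N \<le> v \<Longrightarrow> fv p \<subseteq> {..N} \<Longrightarrow> fv (rename (rh N v) p) \<subseteq> {..<N} \<union> {v}"
  using fv_rename[OF inj_rh, of N v p] by (auto simp: rh_def)

lemma asg_Cons_Suc: "asg (a # z) \<circ> Suc = asg z"
  by (auto simp: fun_eq_iff asg_def)

lemma sat_rh:
  assumes "N \<le> v" "fv p \<subseteq> {..N}" "length z = N" "e v = a" "\<And>j. j < N \<Longrightarrow> e j = z ! j"
  shows "sat S e (rename (rh N v) p) = sat S (asg (a # z)) p"
proof -
  have "sat S e (rename (rh N v) p) = sat S (e \<circ> rh N v) p"
    using assms(1) by (simp add: sat_rename inj_rh)
  also have "\<dots> = sat S (asg (a # z)) p"
  proof (rule sat_cong)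
    fix k assume "k \<in> fv p"
    then have k: "k \<le> N" using assms(2) by auto
    show "(e \<circ> rh N v) k = asg (a # z) k"
    proof (cases k)
      case 0 then show ?thesis using assms by (simp add: rh_def asg_def)
    next
      case (Suc j) then show ?thesis using assms k by (simp add: rh_def asg_def)
    qed
  qed
  finally show ?thesis .
qed

definition projfm :: "nat \<Rightarrow> ('f, 'r) fm \<Rightarrow> ('f, 'r) fm" where
  "projfm N p = Ex N (rename (rh N N) p)"

lemma sat_projfm:
  assumes "fv p \<subseteq> {..N}" "length z = N"
  shows "sat S (asg z) (projfm N p) = (\<exists>a\<in>univ S. sat S (asg (a # z)) p)"
  unfolding projfm_def using sat_rh[OF order_refl assms] by (simp add: asg_def)

lemma is_fm_projfm: "is_fm arf arr (Suc N) p \<Longrightarrow> is_fm arf arr N (projfm N p)"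
  unfolding is_fm_def projfm_def using fv_rh[of N N p] by (auto simp: wf_rename lessThan_Suc_atMost)

definition pls :: "'f tm \<Rightarrow> 'f tm \<Rightarrow> 'f tm" where "pls x y = Fn Add [x, y]"
definition tms :: "'f tm \<Rightarrow> 'f tm \<Rightarrow> 'f tm" where "tms x y = Fn Mul [x, y]"

definition smallbody :: "nat \<Rightarrow> ('f, 'r) fm \<Rightarrow> ('f, 'r) fm" where
  "smallbody N p = Conj (rename (rh N (N+1)) p) (Conj (rename (rh N (N+2)) p)
     (Conj (rename (rh N (N+3)) p) (Conj (rename (rh N (N+4)) p)
     (Conj (Eq (pls (Var (N+1)) (tms (Var N) (Var (N+2)))) (pls (Var (N+3)) (tms (Var N) (Var (N+4)))))
       (Neg (Conj (Eq (Var (N+1)) (Var (N+3))) (Eq (Var (N+2)) (Var (N+4)))))))))"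

definition smallfm :: "nat \<Rightarrow> ('f, 'r) fm \<Rightarrow> ('f, 'r) fm" where
  "smallfm N p = Ex N (Neg (Ex (N+1) (Ex (N+2) (Ex (N+3) (Ex (N+4) (smallbody N p))))))"

definition fibS :: "('a, 'f, 'r) struct \<Rightarrow> ('f, 'r) fm \<Rightarrow> 'a list \<Rightarrow> 'a set" where
  "fibS S p z = {a \<in> univ S. sat S (asg (a # z)) p}"

definition linm :: "('a, 'f, 'r) struct \<Rightarrow> 'a \<Rightarrow> 'a \<times> 'a \<Rightarrow> 'a" where
  "linm S w = (\<lambda>(a, c). fint S Add [a, fint S Mul [w, c]])"

definition smallS :: "('a, 'f, 'r) struct \<Rightarrow> ('f, 'r) fm \<Rightarrow> 'a list \<Rightarrow> bool" where
  "smallS S p z = (\<exists>w\<in>univ S. inj_on (linm S w) (fibS S p z \<times> fibS S p z))"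

lemma sat_smallbody:
  assumes "fv p \<subseteq> {..N}" "length z = N"
  shows "sat S ((asg z)(N:=w, N+1:=a1, N+2:=b1, N+3:=a2, N+4:=b2)) (smallbody N p) =
    (sat S (asg (a1 # z)) p \<and> sat S (asg (b1 # z)) p \<and> sat S (asg (a2 # z)) p \<and> sat S (asg (b2 # z)) p \<and>
     fint S Add [a1, fint S Mul [w, b1]] = fint S Add [a2, fint S Mul [w, b2]] \<and> \<not> (a1 = a2 \<and> b1 = b2))"
proof -
  let ?E = "(asg z)(N:=w, N+1:=a1, N+2:=b1, N+3:=a2, N+4:=b2)"
  have h1: "sat S ?E (rename (rh N (N+1)) p) = sat S (asg (a1 # z)) p"
    by (rule sat_rh) (use assms in \<open>auto simp: asg_def\<close>)
  have h2: "sat S ?E (rename (rh N (N+2)) p) = sat S (asg (b1 # z)) p"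
    by (rule sat_rh) (use assms in \<open>auto simp: asg_def\<close>)
  have h3: "sat S ?E (rename (rh N (N+3)) p) = sat S (asg (a2 # z)) p"
    by (rule sat_rh) (use assms in \<open>auto simp: asg_def\<close>)
  have h4: "sat S ?E (rename (rh N (N+4)) p) = sat S (asg (b2 # z)) p"
    by (rule sat_rh) (use assms in \<open>auto simp: asg_def\<close>)
  show ?thesis unfolding smallbody_def sat.simps h1 h2 h3 h4
    by (simp add: pls_def tms_def)
qed

lemma sat_smallfm:
  assumes "fv p \<subseteq> {..N}" "length z = N"
  shows "sat S (asg z) (smallfm N p) = smallS S p z"
proof -
  have inj: "inj_on (linm S w) (fibS S p z \<times> fibS S p z) \<longleftrightarrow>
     \<not> (\<exists>a1\<in>univ S. \<exists>b1\<in>univ S. \<exists>a2\<in>univ S. \<exists>b2\<in>univ S.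
     sat S (asg (a1 # z)) p \<and> sat S (asg (b1 # z)) p \<and> sat S (asg (a2 # z)) p \<and> sat S (asg (b2 # z)) p \<and>
     fint S Add [a1, fint S Mul [w, b1]] = fint S Add [a2, fint S Mul [w, b2]] \<and> \<not> (a1 = a2 \<and> b1 = b2))" for w
    unfolding inj_on_def linm_def fibS_def by fastforce
  show ?thesis
    unfolding smallfm_def sat.simps sat_smallbody[OF assms] smallS_def inj by blast
qed

lemma is_fm_smallfm: "is_fm arf arr (Suc N) p \<Longrightarrow> is_fm arf arr N (smallfm N p)"
proof -
  assume a: "is_fm arf arr (Suc N) p"
  then have f: "fv p \<subseteq> {..N}" by (auto simp: is_fm_def)
  have h: "fv (rename (rh N (N + k)) p) \<subseteq> {..<N+5}" if "k < 5" for k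
    using fv_rh[OF _ f, of "N+k"] that by auto
  have "fv (smallbody N p) \<subseteq> {..<N+5}"
    unfolding smallbody_def using h[of 1] h[of 2] h[of 3] h[of 4]
    by (simp add: pls_def tms_def)
  then have "fv (smallfm N p) \<subseteq> {..<N}"
    unfolding smallfm_def by auto
  moreover have "wf_fm arf arr (smallfm N p)"
    using a unfolding is_fm_def smallfm_def smallbody_def by (simp add: wf_rename pls_def tms_def)
  ultimately show ?thesis by (simp add: is_fm_def)
qed


lemma dom_uniq:
  fixes R (structure)
  assumes D: "domain R"
    and c: "a1 \<in> carrier R" "a2 \<in> carrier R" "b1 \<in> carrier R" "b2 \<in> carrier R" "w \<in> carrier R" "w' \<in> carrier R"
    and e1: "a1 \<oplus>\<^bsub>R\<^esub> w \<otimes>\<^bsub>R\<^esub> b1 = a2 \<oplus>\<^bsub>R\<^esub> w \<otimes>\<^bsub>R\<^esub> b2"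
    and e2: "a1 \<oplus>\<^bsub>R\<^esub> w' \<otimes>\<^bsub>R\<^esub> b1 = a2 \<oplus>\<^bsub>R\<^esub> w' \<otimes>\<^bsub>R\<^esub> b2"
    and ne: "b1 \<noteq> b2"
  shows "w = w'"
proof -
  interpret domain R by (rule D)
  have "(w \<ominus> w') \<otimes> (b1 \<ominus> b2) = \<zero>"
  proof -
    have "(w \<ominus> w') \<otimes> (b1 \<ominus> b2) = (a1 \<oplus> w \<otimes> b1) \<ominus> (a2 \<oplus> w \<otimes> b2) \<ominus> ((a1 \<oplus> w' \<otimes> b1) \<ominus> (a2 \<oplus> w' \<otimes> b2))"
      using c by algebra
    also have "\<dots> = (a2 \<oplus> w \<otimes> b2) \<ominus> (a2 \<oplus> w \<otimes> b2) \<ominus> ((a2 \<oplus> w' \<otimes> b2) \<ominus> (a2 \<oplus> w' \<otimes> b2))" using e1 e2 by simp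
    also have "\<dots> = \<zero>" using c by algebra
    finally show ?thesis .
  qed
  then have "w \<ominus> w' = \<zero> \<or> b1 \<ominus> b2 = \<zero>" using c integral by blast
  moreover have "w = (w \<ominus> w') \<oplus> w'" "b1 = (b1 \<ominus> b2) \<oplus> b2" using c by algebra+
  ultimately show ?thesis using c ne by force
qed

lemma dom_cancel:
  fixes R (structure)
  assumes D: "domain R"
    and c: "a1 \<in> carrier R" "a2 \<in> carrier R" "b \<in> carrier R" "w \<in> carrier R"
    and e1: "a1 \<oplus>\<^bsub>R\<^esub> w \<otimes>\<^bsub>R\<^esub> b = a2 \<oplus>\<^bsub>R\<^esub> w \<otimes>\<^bsub>R\<^esub> b"
  shows "a1 = a2"
proof -
  interpret domain R by (rule D)
  have "a1 = (a1 \<oplus> w \<otimes> b) \<ominus> w \<otimes> b" "a2 = (a2 \<oplus> w \<otimes> b) \<ominus> w \<otimes> b" using c by algebra+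
  then show ?thesis using e1 by simp
qed


lemma fin_LS: "finite A \<Longrightarrow> finite {xs. length xs = n \<and> set xs \<subseteq> A}"
proof -
  assume f: "finite A"
  have "{xs. length xs = n \<and> set xs \<subseteq> A} = {xs. set xs \<subseteq> A \<and> length xs = n}" by (simp only: conj_commute)
  then show ?thesis using finite_lists_length_eq[OF f] by simp
qed

lemma wf_Add: "wf_struct arf S \<Longrightarrow> a \<in> univ S \<Longrightarrow> c \<in> univ S \<Longrightarrow> fint S Add [a, c] \<in> univ S"
proof -
  assume a: "wf_struct arf S" "a \<in> univ S" "c \<in> univ S"
  then have h: "\<forall>f as. length as = fsym_arity arf f \<and> set as \<subseteq> univ S \<longrightarrow> fint S f as \<in> univ S"
    unfolding wf_struct_def by blast
  show ?thesis using spec[OF spec[OF h, of Add], of "[a, c]"] a by simp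
qed

lemma wf_Mul: "wf_struct arf S \<Longrightarrow> a \<in> univ S \<Longrightarrow> c \<in> univ S \<Longrightarrow> fint S Mul [a, c] \<in> univ S"
proof -
  assume a: "wf_struct arf S" "a \<in> univ S" "c \<in> univ S"
  then have h: "\<forall>f as. length as = fsym_arity arf f \<and> set as \<subseteq> univ S \<longrightarrow> fint S f as \<in> univ S"
    unfolding wf_struct_def by blast
  show ?thesis using spec[OF spec[OF h, of Mul], of "[a, c]"] a by simp
qed

lemma small_card:
  assumes wf: "wf_struct arf S" and fin: "finite (univ S)" and sm: "smallS S p z"
  shows "card (fibS S p z) ^ 2 \<le> card (univ S)"
proof -
  let ?A = "fibS S p z"
  obtain w where w: "w \<in> univ S" and inj: "inj_on (linm S w) (?A \<times> ?A)"
    using sm unfolding smallS_def by blast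
  have A: "?A \<subseteq> univ S" by (auto simp: fibS_def)
  have "linm S w ` (?A \<times> ?A) \<subseteq> univ S"
  proof
    fix y assume "y \<in> linm S w ` (?A \<times> ?A)"
    then obtain a c where ac: "a \<in> ?A" "c \<in> ?A" "y = fint S Add [a, fint S Mul [w, c]]"
      by (auto simp: linm_def)
    have "fint S Mul [w, c] \<in> univ S" using wf_Mul[OF wf w] ac A by blast
    then show "y \<in> univ S" using wf_Add[OF wf] ac A by blast
  qed
  then have "card (linm S w ` (?A \<times> ?A)) \<le> card (univ S)" using fin card_mono by blast
  moreover have "card (linm S w ` (?A \<times> ?A)) = card ?A * card ?A"
    using card_image[OF inj] card_cartesian_product by simp
  ultimately show ?thesis by (simp add: power2_eq_square)
qed

lemma big_small:
  assumes F: "field (ring_reduct S)" and fin: "finite (univ S)"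
    and lt: "card (fibS S p z) ^ 4 < card (univ S)"
  shows "smallS S p z"
proof -
  let ?R = "ring_reduct S"
  let ?A = "fibS S p z"
  have D: "domain ?R" using F field.axioms(1) by blast
  have A: "?A \<subseteq> univ S" by (auto simp: fibS_def)
  have finA: "finite ?A" using A fin finite_subset by blast
  have car: "carrier ?R = univ S" by (simp add: ring_reduct_def)
  have lin: "linm S w (a, c) = a \<oplus>\<^bsub>?R\<^esub> w \<otimes>\<^bsub>?R\<^esub> c" for w a c
    by (simp add: linm_def ring_reduct_def)
  define Q where "Q = ?A \<times> ?A \<times> ?A \<times> ?A"
  define g where "g = (\<lambda>(a1, b1, a2, b2). THE w. w \<in> univ S \<and> linm S w (a1, b1) = linm S w (a2, b2))"
  have sub: "{w \<in> univ S. \<not> inj_on (linm S w) (?A \<times> ?A)} \<subseteq> g ` Q"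
  proof
    fix w assume "w \<in> {w \<in> univ S. \<not> inj_on (linm S w) (?A \<times> ?A)}"
    then have w: "w \<in> univ S" and ni: "\<not> inj_on (linm S w) (?A \<times> ?A)" by auto
    from ni obtain a1 b1 a2 b2 where m: "a1 \<in> ?A" "b1 \<in> ?A" "a2 \<in> ?A" "b2 \<in> ?A"
      and eq: "linm S w (a1, b1) = linm S w (a2, b2)" and ne: "(a1, b1) \<noteq> (a2, b2)"
      unfolding inj_on_def by auto
    have c: "a1 \<in> carrier ?R" "a2 \<in> carrier ?R" "b1 \<in> carrier ?R" "b2 \<in> carrier ?R" "w \<in> carrier ?R"
      using m A w car by auto
    have "b1 \<noteq> b2"
    proof
      assume "b1 = b2"
      have "a1 \<oplus>\<^bsub>?R\<^esub> w \<otimes>\<^bsub>?R\<^esub> b1 = a2 \<oplus>\<^bsub>?R\<^esub> w \<otimes>\<^bsub>?R\<^esub> b1"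
        using eq \<open>b1 = b2\<close> by (simp only: lin)
      then have "a1 = a2" using dom_cancel[OF D c(1,2,3,5)] by blast
      then show False using ne \<open>b1 = b2\<close> by simp
    qed
    have "g (a1, b1, a2, b2) = w"
      unfolding g_def
    proof (simp only: prod.case, rule the_equality)
      show "w \<in> univ S \<and> linm S w (a1, b1) = linm S w (a2, b2)" using w eq by simp
    next
      fix w' assume "w' \<in> univ S \<and> linm S w' (a1, b1) = linm S w' (a2, b2)"
      then have w'c: "w' \<in> carrier ?R" and e': "a1 \<oplus>\<^bsub>?R\<^esub> w' \<otimes>\<^bsub>?R\<^esub> b1 = a2 \<oplus>\<^bsub>?R\<^esub> w' \<otimes>\<^bsub>?R\<^esub> b2"
        using car by (simp_all only: lin)
      have e: "a1 \<oplus>\<^bsub>?R\<^esub> w \<otimes>\<^bsub>?R\<^esub> b1 = a2 \<oplus>\<^bsub>?R\<^esub> w \<otimes>\<^bsub>?R\<^esub> b2"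
        using eq by (simp only: lin)
      show "w' = w" using dom_uniq[OF D c(1-5) w'c e e' \<open>b1 \<noteq> b2\<close>] by simp
    qed
    moreover have "(a1, b1, a2, b2) \<in> Q" using m by (simp add: Q_def)
    ultimately show "w \<in> g ` Q" by force
  qed
  define Bad where "Bad = {w \<in> univ S. \<not> inj_on (linm S w) (?A \<times> ?A)}"
  have finQ: "finite Q" using finA by (simp add: Q_def)
  have c1: "card (g ` Q) \<le> card Q" using card_image_le[OF finQ] .
  have c2: "card Q = card ?A ^ 4" by (simp add: Q_def card_cartesian_product eval_nat_numeral)
  have c3: "card Bad \<le> card (g ` Q)" unfolding Bad_def by (rule card_mono[OF finite_imageI[OF finQ] sub])
  have lt2: "card Bad < card (univ S)" using c1 c2 c3 lt by linarith
  have "\<not> univ S \<subseteq> Bad"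
  proof
    assume "univ S \<subseteq> Bad"
    moreover have "finite Bad" unfolding Bad_def using fin by simp
    ultimately have "card (univ S) \<le> card Bad" by (rule card_mono[rotated])
    then show False using lt2 by linarith
  qed
  then show ?thesis unfolding smallS_def Bad_def by blast
qed

lemma realis_one: "realis S p 1 z = (\<lambda>a. [a]) ` fibS S p z"
proof (intro equalityI subsetI)
  fix xs assume "xs \<in> realis S p 1 z"
  then have h: "length xs = 1" "set xs \<subseteq> univ S" "sat S (asg (xs @ z)) p" by (auto simp: realis_def)
  then obtain a where "xs = [a]" by (metis One_nat_def length_0_conv length_Suc_conv)
  then show "xs \<in> (\<lambda>a. [a]) ` fibS S p z" using h by (auto simp: fibS_def)
next
  fix xs assume "xs \<in> (\<lambda>a. [a]) ` fibS S p z"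
  then show "xs \<in> realis S p 1 z" by (auto simp: fibS_def realis_def)
qed

lemma card_realis_one: "card (realis S p 1 z) = card (fibS S p z)"
  unfolding realis_one by (rule card_image) (auto simp: inj_on_def)

lemma realis_sub_LS: "realis S p n b \<subseteq> {xs. length xs = n \<and> set xs \<subseteq> univ S}"
  by (auto simp: realis_def)

lemma card_realis_le: "finite (univ S) \<Longrightarrow> card (realis S p n b) \<le> card (univ S) ^ n"
proof -
  assume f: "finite (univ S)"
  have "card (realis S p n b) \<le> card {xs. length xs = n \<and> set xs \<subseteq> univ S}"
    by (rule card_mono[OF fin_LS[OF f] realis_sub_LS])
  also have "{xs. length xs = n \<and> set xs \<subseteq> univ S} = {xs. set xs \<subseteq> univ S \<and> length xs = n}" by blast
  also have "card \<dots> = card (univ S) ^ n" using card_lists_length_eq[OF f] .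
  finally show ?thesis .
qed

lemma realis_proj:
  assumes "fv p \<subseteq> {..n + length b}"
  shows "realis S (projfm (n + length b) p) n b = {x'. length x' = n \<and> set x' \<subseteq> univ S \<and> fibS S p (x' @ b) \<noteq> {}}"
  unfolding realis_def fibS_def using sat_projfm[of p "n + length b" "_ @ b" S] assms by auto

lemma realis_Suc_eq:
  "realis S p (Suc n) b = (\<lambda>(x', a). a # x') ` (SIGMA x':{x'. length x' = n \<and> set x' \<subseteq> univ S \<and> fibS S p (x' @ b) \<noteq> {}}. fibS S p (x' @ b))"
  (is "?L = ?R")
proof (intro equalityI subsetI)
  fix xs assume "xs \<in> ?L"
  then have h: "length xs = Suc n" "set xs \<subseteq> univ S" "sat S (asg (xs @ b)) p" by (auto simp: realis_def)
  then obtain a x' where xs: "xs = a # x'" and l: "length x' = n" by (metis length_Suc_conv)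
  have "a \<in> fibS S p (x' @ b)" using h xs by (auto simp: fibS_def)
  then show "xs \<in> ?R" using h xs l by (auto simp: image_iff)
next
  fix xs assume "xs \<in> ?R"
  then show "xs \<in> ?L" by (auto simp: fibS_def realis_def)
qed

lemma card_realis_Suc:
  assumes fin: "finite (univ S)"
  shows "card (realis S p (Suc n) b) = (\<Sum>x'\<in>{x'. length x' = n \<and> set x' \<subseteq> univ S \<and> fibS S p (x' @ b) \<noteq> {}}. card (fibS S p (x' @ b)))"
proof -
  let ?P = "{x'. length x' = n \<and> set x' \<subseteq> univ S \<and> fibS S p (x' @ b) \<noteq> {}}"
  have finP: "finite ?P" using fin_LS[OF fin, of n] by (rule rev_finite_subset) auto
  have finF: "\<forall>x'\<in>?P. finite (fibS S p (x' @ b))" using fin by (auto simp: fibS_def)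
  have "inj_on (\<lambda>(x', a). a # x') (SIGMA x':?P. fibS S p (x' @ b))" by (auto simp: inj_on_def)
  then have "card (realis S p (Suc n) b) = card (SIGMA x':?P. fibS S p (x' @ b))"
    unfolding realis_Suc_eq by (rule card_image)
  also have "\<dots> = (\<Sum>x'\<in>?P. card (fibS S p (x' @ b)))" using card_SigmaI[OF finP finF] .
  finally show ?thesis .
qed

lemma sat_rename_Suc: "sat S (asg (a # z)) (rename Suc q) = sat S (asg z) q"
  using sat_rename[OF inj_Suc, of S "asg (a # z)" q] by (simp only: asg_Cons_Suc)

lemma fibS_conj_suc: "fibS S (Conj p (rename Suc q)) z = (if sat S (asg z) q then fibS S p z else {})"
  unfolding fibS_def by (simp add: sat_rename_Suc)

lemma fibS_conj_neg_suc: "fibS S (Conj p (Neg (rename Suc q))) z = (if sat S (asg z) q then {} else fibS S p z)"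
  unfolding fibS_def by (simp add: sat_rename_Suc)

lemma realis_split:
  "realis S p n b = realis S (Conj p q) n b \<union> realis S (Conj p (Neg q)) n b"
  "realis S (Conj p q) n b \<inter> realis S (Conj p (Neg q)) n b = {}"
  unfolding realis_def by auto


definition sfm :: "nat \<Rightarrow> ('f, 'r) fm \<Rightarrow> ('f, 'r) fm" where
  "sfm N p = Conj p (rename Suc (smallfm N p))"
definition bfm :: "nat \<Rightarrow> ('f, 'r) fm \<Rightarrow> ('f, 'r) fm" where
  "bfm N p = Conj p (Neg (rename Suc (smallfm N p)))"

lemma is_fm_sfm: "is_fm arf arr (Suc N) p \<Longrightarrow> is_fm arf arr (Suc N) (sfm N p)"
proof -
  assume a: "is_fm arf arr (Suc N) p"
  have s: "is_fm arf arr N (smallfm N p)" using is_fm_smallfm[OF a] .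
  have "fv (rename Suc (smallfm N p)) = Suc ` fv (smallfm N p)" by (rule fv_rename[OF inj_Suc])
  also have "\<dots> \<subseteq> {..<Suc N}" using s by (auto simp: is_fm_def)
  finally show ?thesis using a s unfolding is_fm_def sfm_def by (simp add: wf_rename)
qed

lemma is_fm_bfm: "is_fm arf arr (Suc N) p \<Longrightarrow> is_fm arf arr (Suc N) (bfm N p)"
proof -
  assume a: "is_fm arf arr (Suc N) p"
  have s: "is_fm arf arr N (smallfm N p)" using is_fm_smallfm[OF a] .
  have "fv (rename Suc (smallfm N p)) = Suc ` fv (smallfm N p)" by (rule fv_rename[OF inj_Suc])
  also have "\<dots> \<subseteq> {..<Suc N}" using s by (auto simp: is_fm_def)
  finally show ?thesis using a s unfolding is_fm_def bfm_def by (simp add: wf_rename)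
qed

lemma fibS_sfm:
  assumes "fv p \<subseteq> {..N}" "length z = N"
  shows "fibS S (sfm N p) z = (if smallS S p z then fibS S p z else {})"
  unfolding sfm_def fibS_conj_suc sat_smallfm[OF assms] ..

lemma fibS_bfm:
  assumes "fv p \<subseteq> {..N}" "length z = N"
  shows "fibS S (bfm N p) z = (if smallS S p z then {} else fibS S p z)"
  unfolding bfm_def fibS_conj_neg_suc sat_smallfm[OF assms] ..

lemma struct_facts:
  assumes finS: "finite (univ S)" and lb: "length b = m" and psi: "is_fm arf arr (Suc (n + m)) p"
  shows "card (realis S p (Suc n) b) = card (realis S (sfm (n+m) p) (Suc n) b) + card (realis S (bfm (n+m) p) (Suc n) b)"
    and "realis S (projfm (n+m) (sfm (n+m) p)) n b = {x'. length x' = n \<and> set x' \<subseteq> univ S \<and> smallS S p (x' @ b) \<and> fibS S p (x' @ b) \<noteq> {}}"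
    and "realis S (projfm (n+m) (bfm (n+m) p)) n b = {x'. length x' = n \<and> set x' \<subseteq> univ S \<and> \<not> smallS S p (x' @ b) \<and> fibS S p (x' @ b) \<noteq> {}}"
    and "card (realis S (sfm (n+m) p) (Suc n) b) = (\<Sum>x'\<in>realis S (projfm (n+m) (sfm (n+m) p)) n b. card (fibS S p (x' @ b)))"
    and "card (realis S (bfm (n+m) p) (Suc n) b) = (\<Sum>x'\<in>realis S (projfm (n+m) (bfm (n+m) p)) n b. card (fibS S p (x' @ b)))"
proof -
  let ?N = "n + m"
  have fvp: "fv p \<subseteq> {..?N}" using psi by (auto simp: is_fm_def lessThan_Suc_atMost)
  have fvs: "fv (sfm ?N p) \<subseteq> {..?N}" using is_fm_sfm[OF psi] by (auto simp: is_fm_def lessThan_Suc_atMost)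
  have fvb: "fv (bfm ?N p) \<subseteq> {..?N}" using is_fm_bfm[OF psi] by (auto simp: is_fm_def lessThan_Suc_atMost)
  have len: "length (x' @ b) = ?N" if "length x' = n" for x' :: "'a list" using that lb by simp
  have finR: "finite (realis S q k c)" for q k c
    using fin_LS[OF finS, of k] realis_sub_LS[of S q k c] finite_subset by blast
  show "card (realis S p (Suc n) b) = card (realis S (sfm ?N p) (Suc n) b) + card (realis S (bfm ?N p) (Suc n) b)"
  proof -
    have "realis S p (Suc n) b = realis S (sfm ?N p) (Suc n) b \<union> realis S (bfm ?N p) (Suc n) b"
      unfolding sfm_def bfm_def by (rule realis_split(1))
    moreover have "realis S (sfm ?N p) (Suc n) b \<inter> realis S (bfm ?N p) (Suc n) b = {}"
      unfolding sfm_def bfm_def by (rule realis_split(2))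
    ultimately show ?thesis using finR by (simp add: card_Un_disjoint)
  qed
  have ps: "realis S (projfm ?N (sfm ?N p)) n b = {x'. length x' = n \<and> set x' \<subseteq> univ S \<and> fibS S (sfm ?N p) (x' @ b) \<noteq> {}}"
    using realis_proj[of "sfm ?N p" n b S] fvs lb by simp
  have pb: "realis S (projfm ?N (bfm ?N p)) n b = {x'. length x' = n \<and> set x' \<subseteq> univ S \<and> fibS S (bfm ?N p) (x' @ b) \<noteq> {}}"
    using realis_proj[of "bfm ?N p" n b S] fvb lb by simp
  show ps2: "realis S (projfm ?N (sfm ?N p)) n b = {x'. length x' = n \<and> set x' \<subseteq> univ S \<and> smallS S p (x' @ b) \<and> fibS S p (x' @ b) \<noteq> {}}"
    unfolding ps using fibS_sfm[OF fvp len] by (auto split: if_splits)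
  show pb2: "realis S (projfm ?N (bfm ?N p)) n b = {x'. length x' = n \<and> set x' \<subseteq> univ S \<and> \<not> smallS S p (x' @ b) \<and> fibS S p (x' @ b) \<noteq> {}}"
    unfolding pb using fibS_bfm[OF fvp len] by (auto split: if_splits)
  show "card (realis S (sfm ?N p) (Suc n) b) = (\<Sum>x'\<in>realis S (projfm ?N (sfm ?N p)) n b. card (fibS S p (x' @ b)))"
    unfolding card_realis_Suc[OF finS] ps
    by (rule sum.cong) (use fibS_sfm[OF fvp len] in \<open>auto split: if_splits\<close>)
  show "card (realis S (bfm ?N p) (Suc n) b) = (\<Sum>x'\<in>realis S (projfm ?N (bfm ?N p)) n b. card (fibS S p (x' @ b)))"
    unfolding card_realis_Suc[OF finS] pb
    by (rule sum.cong) (use fibS_bfm[OF fvp len] in \<open>auto split: if_splits\<close>)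
qed


lemma ultra_not: "ultrafilter U \<Longrightarrow> eventually (\<lambda>i. \<not> P i) U \<longleftrightarrow> \<not> eventually P U"
proof
  assume u: "ultrafilter U" and n: "eventually (\<lambda>i. \<not> P i) U"
  show "\<not> eventually P U"
  proof
    assume "eventually P U"
    with n have "eventually (\<lambda>i. False) U" by (rule eventually_elim2) auto
    then show False using u by (simp add: ultrafilter_def)
  qed
next
  assume "ultrafilter U" "\<not> eventually P U"
  then show "eventually (\<lambda>i. \<not> P i) U" by (auto simp: ultrafilter_def)
qed

lemma ultra_lim:
  fixes f :: "'i \<Rightarrow> real"
  assumes u: "ultrafilter U" and b: "eventually (\<lambda>i. a \<le> f i \<and> f i \<le> c) U"
  shows "(f \<longlongrightarrow> Lim U f) U"
proof -
  have nb: "U \<noteq> bot" using u by (simp add: ultrafilter_def)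
  define S where "S = {t. eventually (\<lambda>i. t \<le> f i) U}"
  have "eventually (\<lambda>i. a \<le> f i) U" by (rule eventually_mono[OF b]) auto
  then have aS: "a \<in> S" unfolding S_def by simp
  have ub: "t \<le> c" if "t \<in> S" for t
  proof (rule ccontr)
    assume "\<not> t \<le> c"
    have "eventually (\<lambda>i. t \<le> f i) U" using that by (simp add: S_def)
    with b have "eventually (\<lambda>i. False) U" by (rule eventually_elim2) (use \<open>\<not> t \<le> c\<close> in auto)
    then show False using nb by simp
  qed
  have bdd: "bdd_above S" using ub by (auto simp: bdd_above_def)
  define L where "L = Sup S"
  have fL: "(f \<longlongrightarrow> L) U"
  proof (rule order_tendstoI)
    fix y assume "y < L"
    then obtain t where t: "t \<in> S" "y < t" using less_cSup_iff[of S y] aS bdd by (auto simp: L_def)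
    then show "eventually (\<lambda>i. y < f i) U"
      by (rule_tac eventually_mono[of "\<lambda>i. t \<le> f i"]) (auto simp: S_def)
  next
    fix y assume "L < y"
    define t where "t = (L + y) / 2"
    have "t \<notin> S"
    proof
      assume "t \<in> S" then have "t \<le> L" unfolding L_def using bdd by (rule cSup_upper)
      then show False using \<open>L < y\<close> by (simp add: t_def)
    qed
    then have "eventually (\<lambda>i. \<not> t \<le> f i) U" using u by (auto simp: S_def ultrafilter_def)
    then show "eventually (\<lambda>i. f i < y) U"
      by (rule eventually_mono) (use \<open>L < y\<close> in \<open>auto simp: t_def\<close>)
  qed
  have "Lim U f = L" using tendsto_Lim[OF nb fL] .
  then show ?thesis using fL by simp
qed

lemma lq_top:
  fixes q :: "'i \<Rightarrow> nat"
  assumes inf: "\<And>k::nat. eventually (\<lambda>i. q i > k) U"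
  shows "filterlim (\<lambda>i. ln (real (q i))) at_top U"
proof -
  have "filterlim (\<lambda>i. real (q i)) at_top U"
    unfolding filterlim_at_top
  proof
    fix Z :: real
    show "eventually (\<lambda>i. Z \<le> real (q i)) U"
      by (rule eventually_mono[OF inf[of "nat \<lceil>Z\<rceil>"]]) linarith
  qed
  then show ?thesis using filterlim_compose[OF ln_at_top] by blast
qed

lemma div_L_zero:
  fixes L :: "'i \<Rightarrow> real"
  assumes "filterlim L at_top U"
  shows "((\<lambda>i. c / L i) \<longlongrightarrow> 0) U"
  by (rule tendsto_divide_0[OF tendsto_const filterlim_at_top_imp_at_infinity[OF assms]])

lemma AL1:
  fixes L P X s :: "'i \<Rightarrow> real"
  assumes ev: "eventually (\<lambda>i. L i > 0 \<and> 1 \<le> P i \<and> P i \<le> X i \<and> X i \<le> P i * s i \<and> 1 \<le> s i) U"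
    and tP: "((\<lambda>i. ln (P i) / L i) \<longlongrightarrow> k) U" and ts: "((\<lambda>i. ln (s i) / L i) \<longlongrightarrow> 0) U"
  shows "((\<lambda>i. ln (X i) / L i) \<longlongrightarrow> k) U"
proof (rule tendsto_sandwich[OF _ _ tP])
  show "eventually (\<lambda>i. ln (P i) / L i \<le> ln (X i) / L i) U"
    by (rule eventually_mono[OF ev]) (auto intro!: divide_right_mono)
  show "eventually (\<lambda>i. ln (X i) / L i \<le> ln (P i) / L i + ln (s i) / L i) U"
  proof (rule eventually_mono[OF ev])
    fix i assume h: "L i > 0 \<and> 1 \<le> P i \<and> P i \<le> X i \<and> X i \<le> P i * s i \<and> 1 \<le> s i"
    then have "ln (X i) \<le> ln (P i * s i)" by auto
    also have "\<dots> = ln (P i) + ln (s i)" using h by (simp add: ln_mult)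
    finally show "ln (X i) / L i \<le> ln (P i) / L i + ln (s i) / L i"
      using h by (simp add: add_divide_distrib[symmetric] divide_right_mono)
  qed
  show "((\<lambda>i. ln (P i) / L i + ln (s i) / L i) \<longlongrightarrow> k) U"
    using tendsto_add[OF tP ts] by simp
qed

lemma AL2:
  fixes L P X s Q :: "'i \<Rightarrow> real"
  assumes ev: "eventually (\<lambda>i. L i = ln (Q i) \<and> 1 < Q i \<and> L i > 0 \<and> 1 \<le> P i \<and> 1 \<le> s i \<and> P i * s i \<le> X i \<and> X i \<le> P i * Q i) U"
    and tP: "((\<lambda>i. ln (P i) / L i) \<longlongrightarrow> k) U" and ts: "((\<lambda>i. ln (s i) / L i) \<longlongrightarrow> 1) U"
  shows "((\<lambda>i. ln (X i) / L i) \<longlongrightarrow> k + 1) U"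
proof (rule tendsto_sandwich)
  show "eventually (\<lambda>i. ln (P i) / L i + ln (s i) / L i \<le> ln (X i) / L i) U"
  proof (rule eventually_mono[OF ev])
    fix i assume h: "L i = ln (Q i) \<and> 1 < Q i \<and> L i > 0 \<and> 1 \<le> P i \<and> 1 \<le> s i \<and> P i * s i \<le> X i \<and> X i \<le> P i * Q i"
    have "1 * 1 \<le> P i * s i" by (rule mult_mono) (use h in auto)
    then have "P i * s i > 0" by simp
    then have "X i > 0" using h by linarith
    have "ln (P i) + ln (s i) = ln (P i * s i)" using h by (simp add: ln_mult)
    also have "\<dots> \<le> ln (X i)" using h \<open>P i * s i > 0\<close> \<open>X i > 0\<close> by (subst ln_le_cancel_iff) auto
    finally show "ln (P i) / L i + ln (s i) / L i \<le> ln (X i) / L i"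
      using h by (simp add: add_divide_distrib[symmetric] divide_right_mono)
  qed
  show "eventually (\<lambda>i. ln (X i) / L i \<le> ln (P i) / L i + 1) U"
  proof (rule eventually_mono[OF ev])
    fix i assume h: "L i = ln (Q i) \<and> 1 < Q i \<and> L i > 0 \<and> 1 \<le> P i \<and> 1 \<le> s i \<and> P i * s i \<le> X i \<and> X i \<le> P i * Q i"
    have Q: "Q i > 0" using h by linarith
    have "1 * 1 \<le> P i * s i" by (rule mult_mono) (use h in auto)
    then have X: "X i > 0" using h by linarith
    have "ln (X i) \<le> ln (P i * Q i)" using h Q X by (subst ln_le_cancel_iff) auto
    also have "\<dots> = ln (P i) + L i" using h Q by (simp add: ln_mult)
    finally have "ln (X i) \<le> ln (P i) + L i" .
    then have "ln (X i) / L i \<le> (ln (P i) + L i) / L i" using h by (intro divide_right_mono) auto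
    also have "\<dots> = ln (P i) / L i + 1" using h by (simp add: add_divide_distrib)
    finally show "ln (X i) / L i \<le> ln (P i) / L i + 1" .
  qed
  show "((\<lambda>i. ln (P i) / L i + ln (s i) / L i) \<longlongrightarrow> k + 1) U" using tendsto_add[OF tP ts] .
  show "((\<lambda>i. ln (P i) / L i + 1) \<longlongrightarrow> k + 1) U" using tendsto_add[OF tP tendsto_const] .
qed

lemma AL3:
  fixes L A B X :: "'i \<Rightarrow> real"
  assumes Lt: "filterlim L at_top U"
    and ev: "eventually (\<lambda>i. L i > 0 \<and> 1 \<le> A i \<and> 1 \<le> B i \<and> X i = A i + B i) U"
    and tA: "((\<lambda>i. ln (A i) / L i) \<longlongrightarrow> a) U" and tB: "((\<lambda>i. ln (B i) / L i) \<longlongrightarrow> b) U"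
  shows "((\<lambda>i. ln (X i) / L i) \<longlongrightarrow> max a b) U"
proof (rule tendsto_sandwich)
  show "eventually (\<lambda>i. max (ln (A i) / L i) (ln (B i) / L i) \<le> ln (X i) / L i) U"
  proof (rule eventually_mono[OF ev])
    fix i assume h: "L i > 0 \<and> 1 \<le> A i \<and> 1 \<le> B i \<and> X i = A i + B i"
    have "ln (A i) \<le> ln (X i)" "ln (B i) \<le> ln (X i)" using h by auto
    then show "max (ln (A i) / L i) (ln (B i) / L i) \<le> ln (X i) / L i"
      using h by (auto intro!: divide_right_mono)
  qed
  show "eventually (\<lambda>i. ln (X i) / L i \<le> max (ln (A i) / L i) (ln (B i) / L i) + ln 2 / L i) U"
  proof (rule eventually_mono[OF ev])
    fix i assume h: "L i > 0 \<and> 1 \<le> A i \<and> 1 \<le> B i \<and> X i = A i + B i"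
    have "X i \<le> 2 * max (A i) (B i)" using h by auto
    then have "ln (X i) \<le> ln (2 * max (A i) (B i))" using h by (subst ln_le_cancel_iff) auto
    also have "\<dots> = ln 2 + max (ln (A i)) (ln (B i))" using h by (simp add: ln_mult max_def)
    finally have "ln (X i) / L i \<le> (ln 2 + max (ln (A i)) (ln (B i))) / L i"
      using h by (simp add: divide_right_mono)
    also have "\<dots> = max (ln (A i) / L i) (ln (B i) / L i) + ln 2 / L i"
    proof -
      have m: "max (ln (A i)) (ln (B i)) / L i = max (ln (A i) / L i) (ln (B i) / L i)"
      proof (cases "ln (A i) \<le> ln (B i)")
        case True
        then have "ln (A i) / L i \<le> ln (B i) / L i" using h by (simp add: divide_right_mono)
        with True show ?thesis by (simp add: max.absorb2)
      next
        case False
        then have "ln (B i) / L i \<le> ln (A i) / L i" using h by (simp add: divide_right_mono)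
        with False show ?thesis by (simp add: max.absorb1)
      qed
      show ?thesis by (simp only: add_divide_distrib m)
    qed
    finally show "ln (X i) / L i \<le> max (ln (A i) / L i) (ln (B i) / L i) + ln 2 / L i" .
  qed
  show "((\<lambda>i. max (ln (A i) / L i) (ln (B i) / L i)) \<longlongrightarrow> max a b) U"
    using tendsto_max[OF tA tB] .
  show "((\<lambda>i. max (ln (A i) / L i) (ln (B i) / L i) + ln 2 / L i) \<longlongrightarrow> max a b) U"
    using tendsto_add[OF tendsto_max[OF tA tB] div_L_zero[OF Lt, of "ln 2"]] by simp
qed


definition rt :: "('i \<Rightarrow> ('a, 'f, 'r) struct) \<Rightarrow> ('f, 'r) fm \<Rightarrow> nat \<Rightarrow> ('i \<Rightarrow> 'a list) \<Rightarrow> 'i \<Rightarrow> real" where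
  "rt M p n b = (\<lambda>i. ln (real (card (realis (M i) p n (b i)))) / ln (real (card (univ (M i)))))"

lemma delta_rt: "delta U M p n b = (if up_nonempty U M p n b then ereal (Lim U (rt M p n b)) else -\<infinity>)"
  unfolding delta_def rt_def by simp

lemma obtain_max:
  fixes f :: "'b \<Rightarrow> nat"
  assumes "finite A" "A \<noteq> {}" shows "\<exists>x\<in>A. \<forall>y\<in>A. f y \<le> f x"
proof -
  have "Max (f ` A) \<in> f ` A" using assms by simp
  then obtain x where x: "x \<in> A" "f x = Max (f ` A)" by auto
  have "\<forall>y\<in>A. f y \<le> f x" using x assms by simp
  then show ?thesis using x by blast
qed

lemma obtain_min:
  fixes f :: "'b \<Rightarrow> nat"
  assumes "finite A" "A \<noteq> {}" shows "\<exists>x\<in>A. \<forall>y\<in>A. f x \<le> f y"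
proof -
  have "Min (f ` A) \<in> f ` A" using assms by simp
  then obtain x where x: "x \<in> A" "f x = Min (f ` A)" by auto
  have "\<forall>y\<in>A. f x \<le> f y" using x assms by simp
  then show ?thesis using x by blast
qed

context
  fixes arf :: "'f \<Rightarrow> nat" and arr :: "'r \<Rightarrow> nat"
    and U :: "'i filter" and M :: "'i \<Rightarrow> ('a, 'f, 'r) struct"
  assumes ultra: "ultrafilter U"
    and wf: "\<And>i. wf_struct arf (M i)"
    and fin: "\<And>i. finite (univ (M i))"
    and infinite: "\<And>k::nat. eventually (\<lambda>i. card (univ (M i)) > k) U"
    and is_field: "eventually (\<lambda>i. field (ring_reduct (M i))) U"
    and hyp: "\<And>m phi b. is_fm arf arr (1 + m) phi \<Longrightarrow> up_tuple U M m b \<Longrightarrow>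
               up_nonempty U M phi 1 b \<Longrightarrow> delta U M phi 1 b \<in> {0, 1}"
begin

lemma finR: "finite (realis (M i) p n c)"
  using fin_LS[OF fin[of i], of n] realis_sub_LS[of "M i" p n c] finite_subset by blast

lemma cardR: "card (realis (M i) p n c) \<le> card (univ (M i)) ^ n"
  using card_realis_le[of "M i" p n c] fin[of i] by blast

lemma nbot: "U \<noteq> bot" using ultra by (simp add: ultrafilter_def)

lemma Ltop: "filterlim (\<lambda>i. ln (real (card (univ (M i))))) at_top U"
  by (rule lq_top[OF infinite])

lemma delta_val:
  assumes "up_nonempty U M p n b" "(rt M p n b \<longlongrightarrow> k) U"
  shows "delta U M p n b = ereal k"
  using assms tendsto_Lim[OF nbot] by (simp add: delta_rt)

lemma delta_ninf: "\<not> up_nonempty U M p n b \<Longrightarrow> delta U M p n b = -\<infinity>"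
  by (simp add: delta_rt)

lemma not_ev_empty: "eventually (\<lambda>i. P i = {}) U \<Longrightarrow> \<not> eventually (\<lambda>i. P i \<noteq> {}) U"
  using ultra_not[OF ultra, of "\<lambda>i. P i \<noteq> {}"] by simp

lemma hyp_lim:
  assumes psi: "is_fm arf arr (Suc N) p" and c: "up_tuple U M N c"
    and ne: "eventually (\<lambda>i. realis (M i) p 1 (c i) \<noteq> {}) U"
  shows "(rt M p 1 c \<longlongrightarrow> 0) U \<or> (rt M p 1 c \<longlongrightarrow> 1) U"
proof -
  have un: "up_nonempty U M p 1 c" using ne by (simp add: up_nonempty_def)
  have "delta U M p 1 c \<in> {0, 1}" using hyp[of N p c] psi c un by simp
  then have Lv: "Lim U (rt M p 1 c) = 0 \<or> Lim U (rt M p 1 c) = 1"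
    using un by (auto simp: delta_rt zero_ereal_def one_ereal_def)
  have "eventually (\<lambda>i. 0 \<le> rt M p 1 c i \<and> rt M p 1 c i \<le> 1) U"
    using ne infinite[of 1]
  proof (rule eventually_elim2)
    fix i assume a: "realis (M i) p 1 (c i) \<noteq> {}" "1 < card (univ (M i))"
    have f: "finite (realis (M i) p 1 (c i))" by (rule finR)
    have c1: "1 \<le> card (realis (M i) p 1 (c i))" using a f by (simp add: Suc_le_eq card_gt_0_iff)
    have c2: "card (realis (M i) p 1 (c i)) \<le> card (univ (M i))" using cardR[of i p 1 "c i"] by simp
    have lq: "ln (real (card (univ (M i)))) > 0" using a by simp
    have "0 \<le> ln (real (card (realis (M i) p 1 (c i))))" using c1 by simp
    moreover have "ln (real (card (realis (M i) p 1 (c i)))) \<le> ln (real (card (univ (M i))))"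
      using c1 c2 by simp
    ultimately show "0 \<le> rt M p 1 c i \<and> rt M p 1 c i \<le> 1" using lq by (simp add: rt_def)
  qed
  then have "(rt M p 1 c \<longlongrightarrow> Lim U (rt M p 1 c)) U" by (rule ultra_lim[OF ultra])
  then show ?thesis using Lv by auto
qed

lemma fib0:
  assumes psi: "is_fm arf arr (Suc N) p" and c: "up_tuple U M N c"
    and ne: "eventually (\<lambda>i. realis (M i) p 1 (c i) \<noteq> {}) U"
    and sm: "eventually (\<lambda>i. card (realis (M i) p 1 (c i)) ^ 2 \<le> card (univ (M i))) U"
  shows "(rt M p 1 c \<longlongrightarrow> 0) U"
proof -
  have ev: "eventually (\<lambda>i. rt M p 1 c i \<le> 1/2) U"
    using eventually_conj[OF sm eventually_conj[OF infinite[of 1] ne]]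
  proof (rule eventually_mono)
    fix i assume "card (realis (M i) p 1 (c i)) ^ 2 \<le> card (univ (M i)) \<and> 1 < card (univ (M i)) \<and>
      realis (M i) p 1 (c i) \<noteq> {}"
    then have a: "card (realis (M i) p 1 (c i)) ^ 2 \<le> card (univ (M i))" "1 < card (univ (M i))"
      "realis (M i) p 1 (c i) \<noteq> {}" by auto
    have f: "finite (realis (M i) p 1 (c i))" by (rule finR)
    have c1: "1 \<le> card (realis (M i) p 1 (c i))" using a f by (simp add: Suc_le_eq card_gt_0_iff)
    have "real (card (realis (M i) p 1 (c i))) ^ 2 \<le> real (card (univ (M i)))"
      using a(1) by (metis of_nat_le_iff of_nat_power)
    then have "ln (real (card (realis (M i) p 1 (c i))) ^ 2) \<le> ln (real (card (univ (M i))))"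
      using c1 a(2) by (subst ln_le_cancel_iff) auto
    then have "2 * ln (real (card (realis (M i) p 1 (c i)))) \<le> ln (real (card (univ (M i))))"
      using c1 by (simp add: ln_realpow)
    moreover have "ln (real (card (univ (M i)))) > 0" using a by simp
    ultimately show "rt M p 1 c i \<le> 1/2" by (simp add: rt_def divide_simps)
  qed
  show ?thesis
  proof (cases "(rt M p 1 c \<longlongrightarrow> 0) U")
    case False
    then have t: "(rt M p 1 c \<longlongrightarrow> 1) U" using hyp_lim[OF psi c ne] by blast
    have "(1::real) \<le> 1/2" using tendsto_upperbound[OF t ev nbot] .
    then show ?thesis by simp
  qed
qed

lemma fib1:
  assumes psi: "is_fm arf arr (Suc N) p" and c: "up_tuple U M N c"
    and ne: "eventually (\<lambda>i. realis (M i) p 1 (c i) \<noteq> {}) U"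
    and bg: "eventually (\<lambda>i. card (univ (M i)) \<le> card (realis (M i) p 1 (c i)) ^ 4) U"
  shows "(rt M p 1 c \<longlongrightarrow> 1) U"
proof -
  have ev: "eventually (\<lambda>i. 1/4 \<le> rt M p 1 c i) U"
    using eventually_conj[OF bg eventually_conj[OF infinite[of 1] ne]]
  proof (rule eventually_mono)
    fix i assume "card (univ (M i)) \<le> card (realis (M i) p 1 (c i)) ^ 4 \<and> 1 < card (univ (M i)) \<and>
      realis (M i) p 1 (c i) \<noteq> {}"
    then have a: "card (univ (M i)) \<le> card (realis (M i) p 1 (c i)) ^ 4" "1 < card (univ (M i))"
      "realis (M i) p 1 (c i) \<noteq> {}" by auto
    have f: "finite (realis (M i) p 1 (c i))" by (rule finR)
    have c1: "1 \<le> card (realis (M i) p 1 (c i))" using a f by (simp add: Suc_le_eq card_gt_0_iff)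
    have "real (card (univ (M i))) \<le> real (card (realis (M i) p 1 (c i))) ^ 4"
      using a(1) by (metis of_nat_le_iff of_nat_power)
    then have "ln (real (card (univ (M i)))) \<le> ln (real (card (realis (M i) p 1 (c i))) ^ 4)"
      using a(2) c1 by (subst ln_le_cancel_iff) auto
    then have "ln (real (card (univ (M i)))) \<le> 4 * ln (real (card (realis (M i) p 1 (c i))))"
      using a(2,3) by (simp add: ln_realpow)
    moreover have "ln (real (card (univ (M i)))) > 0" using a by simp
    ultimately show "1/4 \<le> rt M p 1 c i" by (simp add: rt_def divide_simps)
  qed
  show ?thesis
  proof (cases "(rt M p 1 c \<longlongrightarrow> 1) U")
    case False
    then have t: "(rt M p 1 c \<longlongrightarrow> 0) U" using hyp_lim[OF psi c ne] by blast
    have "(1/4::real) \<le> 0" using tendsto_lowerbound[OF t ev nbot] .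
    then show ?thesis by simp
  qed
qed


lemma step:
  assumes psi: "is_fm arf arr (Suc (n + m)) p"
    and IHs: "\<And>b. up_tuple U M m b \<Longrightarrow> up_nonempty U M (projfm (n+m) (sfm (n+m) p)) n b \<Longrightarrow>
               \<exists>k\<le>n. (rt M (projfm (n+m) (sfm (n+m) p)) n b \<longlongrightarrow> real k) U"
    and IHb: "\<And>b. up_tuple U M m b \<Longrightarrow> up_nonempty U M (projfm (n+m) (bfm (n+m) p)) n b \<Longrightarrow>
               \<exists>k\<le>n. (rt M (projfm (n+m) (bfm (n+m) p)) n b \<longlongrightarrow> real k) U"
    and b: "up_tuple U M m b"
  shows "(up_nonempty U M p (Suc n) b \<longrightarrow> (\<exists>k\<le>Suc n. (rt M p (Suc n) b \<longlongrightarrow> real k) U)) \<and>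
         delta U M p (Suc n) b = max (delta U M (projfm (n+m) (sfm (n+m) p)) n b) (delta U M (projfm (n+m) (bfm (n+m) p)) n b + 1)"
proof -
  define N where "N = n + m"
  define Ps where "Ps = (\<lambda>i. realis (M i) (projfm N (sfm N p)) n (b i))"
  define Pb where "Pb = (\<lambda>i. realis (M i) (projfm N (bfm N p)) n (b i))"
  define Xs where "Xs = (\<lambda>i. realis (M i) (sfm N p) (Suc n) (b i))"
  define Xb where "Xb = (\<lambda>i. realis (M i) (bfm N p) (Suc n) (b i))"
  define X where "X = (\<lambda>i. realis (M i) p (Suc n) (b i))"
  define F where "F = (\<lambda>i x'. fibS (M i) p (x' @ b i))"
  define Q where "Q = (\<lambda>i. card (univ (M i)))"
  define L where "L = (\<lambda>i. ln (real (Q i)))"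
  define good where "good = (\<lambda>i. length (b i) = m \<and> set (b i) \<subseteq> univ (M i) \<and> field (ring_reduct (M i)) \<and> 1 < Q i)"
  have psiN: "is_fm arf arr (Suc N) p" using psi by (simp add: N_def)
  have evg: "eventually good U"
    using eventually_conj[OF b[unfolded up_tuple_def] eventually_conj[OF is_field infinite[of 1]]]
    by (rule eventually_mono) (auto simp: good_def Q_def)
  have G: "card (X i) = card (Xs i) + card (Xb i) \<and>
      Ps i = {x'. length x' = n \<and> set x' \<subseteq> univ (M i) \<and> smallS (M i) p (x' @ b i) \<and> F i x' \<noteq> {}} \<and>
      Pb i = {x'. length x' = n \<and> set x' \<subseteq> univ (M i) \<and> \<not> smallS (M i) p (x' @ b i) \<and> F i x' \<noteq> {}} \<and>
      card (Xs i) = (\<Sum>x'\<in>Ps i. card (F i x')) \<and> card (Xb i) = (\<Sum>x'\<in>Pb i. card (F i x'))" if "good i" for i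
  proof -
    have lb: "length (b i) = m" using that by (simp add: good_def)
    note sf = struct_facts[OF fin[of i] lb psi]
    show ?thesis unfolding X_def Xs_def Xb_def Ps_def Pb_def F_def N_def using sf by blast
  qed
  have finPs: "finite (Ps i)" "finite (Pb i)" "finite (Xs i)" "finite (Xb i)" "finite (X i)" for i
    unfolding Ps_def Pb_def Xs_def Xb_def X_def by (rule finR)+
  have FU: "F i x' \<subseteq> univ (M i)" for i x' by (auto simp: F_def fibS_def)
  have finF: "finite (F i x')" for i x' using FU fin finite_subset by blast
  have FQ: "card (F i x') \<le> Q i" for i x' unfolding Q_def using FU fin card_mono by blast
  have R1: "card (realis (M i) p 1 (x' @ b i)) = card (F i x')" for i x'
    unfolding F_def by (rule card_realis_one)
  have F1: "1 \<le> card (F i x')" if "F i x' \<noteq> {}" for i x'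
    using that finF[of i x'] by (simp add: Suc_le_eq card_gt_0_iff)
  have sm2: "card (F i x') ^ 2 \<le> Q i" if "good i" "x' \<in> Ps i" for i x'
  proof -
    have "smallS (M i) p (x' @ b i)" using G[OF that(1)] that(2) by blast
    then show ?thesis unfolding F_def Q_def by (rule small_card[OF wf fin])
  qed
  have bg4: "Q i \<le> card (F i x') ^ 4" if "good i" "x' \<in> Pb i" for i x'
  proof (rule ccontr)
    assume "\<not> Q i \<le> card (F i x') ^ 4"
    then have "card (fibS (M i) p (x' @ b i)) ^ 4 < card (univ (M i))" by (simp add: F_def Q_def)
    then have "smallS (M i) p (x' @ b i)" using big_small[OF _ fin] that(1) by (simp add: good_def)
    then show False using G[OF that(1)] that(2) by blast
  qed
  have PsU: "length x' = n \<and> set x' \<subseteq> univ (M i) \<and> F i x' \<noteq> {}" if "good i" "x' \<in> Ps i" for i x'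
    using G[OF that(1)] that(2) by blast
  have PbU: "length x' = n \<and> set x' \<subseteq> univ (M i) \<and> F i x' \<noteq> {}" if "good i" "x' \<in> Pb i" for i x'
    using G[OF that(1)] that(2) by blast
  have sumge: "card A \<le> (\<Sum>x'\<in>A. card (F i x'))" if "\<forall>x'\<in>A. F i x' \<noteq> {}" for A i
  proof -
    have "card A = (\<Sum>x'\<in>A. (1::nat))" by simp
    also have "\<dots> \<le> (\<Sum>x'\<in>A. card (F i x'))" by (rule sum_mono) (use that F1 in auto)
    finally show ?thesis .
  qed
  have Lpos: "L i > 0" if "good i" for i using that by (simp add: good_def L_def)
  have rtX: "rt M p (Suc n) b = (\<lambda>i. ln (real (card (X i))) / L i)"
    by (simp add: rt_def X_def L_def Q_def)
  have rtPs: "rt M (projfm N (sfm N p)) n b = (\<lambda>i. ln (real (card (Ps i))) / L i)"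
    by (simp add: rt_def Ps_def L_def Q_def)
  have rtPb: "rt M (projfm N (bfm N p)) n b = (\<lambda>i. ln (real (card (Pb i))) / L i)"
    by (simp add: rt_def Pb_def L_def Q_def)
  have rtc: "rt M p 1 c = (\<lambda>i. ln (real (card (realis (M i) p 1 (c i)))) / L i)" for c
    by (simp add: rt_def L_def Q_def)
  have tuple: "up_tuple U M N (\<lambda>i. xs i @ b i)"
    if "eventually (\<lambda>i. good i \<and> length (xs i) = n \<and> set (xs i) \<subseteq> univ (M i)) U" for xs
    unfolding up_tuple_def by (rule eventually_mono[OF that]) (auto simp: good_def N_def)
  have ne1: "eventually (\<lambda>i. realis (M i) p 1 (xs i @ b i) \<noteq> {}) U"
    if "eventually (\<lambda>i. F i (xs i) \<noteq> {}) U" for xs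
    by (rule eventually_mono[OF that]) (metis F_def image_is_empty realis_one)

  have PS: "\<exists>ks\<le>n. ((\<lambda>i. ln (real (card (Xs i))) / L i) \<longlongrightarrow> real ks) U \<and>
                  ((\<lambda>i. ln (real (card (Ps i))) / L i) \<longlongrightarrow> real ks) U"
    if es: "eventually (\<lambda>i. Ps i \<noteq> {}) U"
  proof -
    have un: "up_nonempty U M (projfm N (sfm N p)) n b" using es by (simp add: up_nonempty_def Ps_def)
    obtain ks where ks: "ks \<le> n" "(rt M (projfm N (sfm N p)) n b \<longlongrightarrow> real ks) U"
      using IHs[OF b] un by (auto simp: N_def)
    define xs where "xs = (\<lambda>i. SOME x'. x' \<in> Ps i \<and> (\<forall>y\<in>Ps i. card (F i y) \<le> card (F i x')))"
    have xsP: "xs i \<in> Ps i \<and> (\<forall>y\<in>Ps i. card (F i y) \<le> card (F i (xs i)))" if nei: "Ps i \<noteq> {}" for i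
    proof -
      obtain x where "x \<in> Ps i" "\<forall>y\<in>Ps i. card (F i y) \<le> card (F i x)"
        using obtain_max[OF finPs(1) nei, of "card \<circ> F i"] by auto
      then show ?thesis unfolding xs_def by (rule someI[where x = x, OF conjI])
    qed
    have evE: "eventually (\<lambda>i. good i \<and> Ps i \<noteq> {}) U" using eventually_conj[OF evg es] .
    have E: "good i \<and> xs i \<in> Ps i \<and> (\<forall>y\<in>Ps i. card (F i y) \<le> card (F i (xs i))) \<and> Ps i \<noteq> {}"
      if "good i \<and> Ps i \<noteq> {}" for i using that xsP by blast
    have evE2: "eventually (\<lambda>i. good i \<and> xs i \<in> Ps i \<and> (\<forall>y\<in>Ps i. card (F i y) \<le> card (F i (xs i))) \<and> Ps i \<noteq> {}) U"
      by (rule eventually_mono[OF evE E])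
    define c where "c = (\<lambda>i. xs i @ b i)"
    have ct: "up_tuple U M N c" unfolding c_def
      by (rule tuple, rule eventually_mono[OF evE2]) (use PsU in blast)
    have cne: "eventually (\<lambda>i. realis (M i) p 1 (c i) \<noteq> {}) U" unfolding c_def
      by (rule ne1, rule eventually_mono[OF evE2]) (use PsU in blast)
    have csm: "eventually (\<lambda>i. card (realis (M i) p 1 (c i)) ^ 2 \<le> card (univ (M i))) U"
      by (rule eventually_mono[OF evE2]) (use sm2 R1 in \<open>auto simp: c_def Q_def\<close>)
    have t0: "(rt M p 1 c \<longlongrightarrow> 0) U" by (rule fib0[OF psiN ct cne csm])
    have "((\<lambda>i. ln (real (card (Xs i))) / L i) \<longlongrightarrow> real ks) U"
    proof (rule AL1[where P = "\<lambda>i. real (card (Ps i))" and s = "\<lambda>i. real (card (F i (xs i)))"])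
      show "((\<lambda>i. ln (real (card (Ps i))) / L i) \<longlongrightarrow> real ks) U" using ks(2) rtPs by simp
      show "((\<lambda>i. ln (real (card (F i (xs i)))) / L i) \<longlongrightarrow> 0) U" using t0 rtc[of c] R1 by (simp add: c_def)
      show "eventually (\<lambda>i. L i > 0 \<and> 1 \<le> real (card (Ps i)) \<and> real (card (Ps i)) \<le> real (card (Xs i)) \<and>
          real (card (Xs i)) \<le> real (card (Ps i)) * real (card (F i (xs i))) \<and> 1 \<le> real (card (F i (xs i)))) U"
      proof (rule eventually_mono[OF evE2])
        fix i assume h: "good i \<and> xs i \<in> Ps i \<and> (\<forall>y\<in>Ps i. card (F i y) \<le> card (F i (xs i))) \<and> Ps i \<noteq> {}"
        have Gi: "card (Xs i) = (\<Sum>x'\<in>Ps i. card (F i x'))" using G h by blast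
        have a1: "1 \<le> card (Ps i)" using h finPs(1)[of i] by (simp add: Suc_le_eq card_gt_0_iff)
        have a2: "card (Ps i) \<le> card (Xs i)" unfolding Gi by (rule sumge) (use PsU h in blast)
        have a3: "card (Xs i) \<le> card (Ps i) * card (F i (xs i))" unfolding Gi
          using sum_bounded_above[of "Ps i" "card \<circ> F i" "card (F i (xs i))"] h by auto
        have a4: "1 \<le> card (F i (xs i))" using F1 PsU h by blast
        have "real (card (Xs i)) \<le> real (card (Ps i) * card (F i (xs i)))" using a3 by linarith
        then show "L i > 0 \<and> 1 \<le> real (card (Ps i)) \<and> real (card (Ps i)) \<le> real (card (Xs i)) \<and>
          real (card (Xs i)) \<le> real (card (Ps i)) * real (card (F i (xs i))) \<and> 1 \<le> real (card (F i (xs i)))"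
          using a1 a2 a4 Lpos h by simp
      qed
    qed
    then show ?thesis using ks rtPs by auto
  qed

  have PB: "\<exists>kb\<le>n. ((\<lambda>i. ln (real (card (Xb i))) / L i) \<longlongrightarrow> real kb + 1) U \<and>
                  ((\<lambda>i. ln (real (card (Pb i))) / L i) \<longlongrightarrow> real kb) U"
    if eb: "eventually (\<lambda>i. Pb i \<noteq> {}) U"
  proof -
    have un: "up_nonempty U M (projfm N (bfm N p)) n b" using eb by (simp add: up_nonempty_def Pb_def)
    obtain kb where kb: "kb \<le> n" "(rt M (projfm N (bfm N p)) n b \<longlongrightarrow> real kb) U"
      using IHb[OF b] un by (auto simp: N_def)
    define xs where "xs = (\<lambda>i. SOME x'. x' \<in> Pb i \<and> (\<forall>y\<in>Pb i. card (F i x') \<le> card (F i y)))"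
    have xsP: "xs i \<in> Pb i \<and> (\<forall>y\<in>Pb i. card (F i (xs i)) \<le> card (F i y))" if nei: "Pb i \<noteq> {}" for i
    proof -
      obtain x where "x \<in> Pb i" "\<forall>y\<in>Pb i. card (F i x) \<le> card (F i y)"
        using obtain_min[OF finPs(2) nei, of "card \<circ> F i"] by auto
      then show ?thesis unfolding xs_def by (rule someI[where x = x, OF conjI])
    qed
    have evE: "eventually (\<lambda>i. good i \<and> Pb i \<noteq> {}) U" using eventually_conj[OF evg eb] .
    have E: "good i \<and> xs i \<in> Pb i \<and> (\<forall>y\<in>Pb i. card (F i (xs i)) \<le> card (F i y)) \<and> Pb i \<noteq> {}"
      if "good i \<and> Pb i \<noteq> {}" for i using that xsP by blast
    have evE2: "eventually (\<lambda>i. good i \<and> xs i \<in> Pb i \<and> (\<forall>y\<in>Pb i. card (F i (xs i)) \<le> card (F i y)) \<and> Pb i \<noteq> {}) U"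
      by (rule eventually_mono[OF evE E])
    define c where "c = (\<lambda>i. xs i @ b i)"
    have ct: "up_tuple U M N c" unfolding c_def
      by (rule tuple, rule eventually_mono[OF evE2]) (use PbU in blast)
    have cne: "eventually (\<lambda>i. realis (M i) p 1 (c i) \<noteq> {}) U" unfolding c_def
      by (rule ne1, rule eventually_mono[OF evE2]) (use PbU in blast)
    have cbg: "eventually (\<lambda>i. card (univ (M i)) \<le> card (realis (M i) p 1 (c i)) ^ 4) U"
      by (rule eventually_mono[OF evE2]) (use bg4 R1 in \<open>auto simp: c_def Q_def\<close>)
    have t1: "(rt M p 1 c \<longlongrightarrow> 1) U" by (rule fib1[OF psiN ct cne cbg])
    have "((\<lambda>i. ln (real (card (Xb i))) / L i) \<longlongrightarrow> real kb + 1) U"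
    proof (rule AL2[where P = "\<lambda>i. real (card (Pb i))" and s = "\<lambda>i. real (card (F i (xs i)))"
          and Q = "\<lambda>i. real (Q i)"])
      show "((\<lambda>i. ln (real (card (Pb i))) / L i) \<longlongrightarrow> real kb) U" using kb(2) rtPb by simp
      show "((\<lambda>i. ln (real (card (F i (xs i)))) / L i) \<longlongrightarrow> 1) U" using t1 rtc[of c] R1 by (simp add: c_def)
      show "eventually (\<lambda>i. L i = ln (real (Q i)) \<and> 1 < real (Q i) \<and> L i > 0 \<and> 1 \<le> real (card (Pb i)) \<and>
          1 \<le> real (card (F i (xs i))) \<and> real (card (Pb i)) * real (card (F i (xs i))) \<le> real (card (Xb i)) \<and>
          real (card (Xb i)) \<le> real (card (Pb i)) * real (Q i)) U"
      proof (rule eventually_mono[OF evE2])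
        fix i assume h: "good i \<and> xs i \<in> Pb i \<and> (\<forall>y\<in>Pb i. card (F i (xs i)) \<le> card (F i y)) \<and> Pb i \<noteq> {}"
        have Gi: "card (Xb i) = (\<Sum>x'\<in>Pb i. card (F i x'))" using G h by blast
        have a1: "1 \<le> card (Pb i)" using h finPs(2)[of i] by (simp add: Suc_le_eq card_gt_0_iff)
        have a3: "card (Pb i) * card (F i (xs i)) \<le> card (Xb i)" unfolding Gi
          using sum_bounded_below[of "Pb i" "card (F i (xs i))" "card \<circ> F i"] h by auto
        have a5: "card (Xb i) \<le> card (Pb i) * Q i" unfolding Gi
          using sum_bounded_above[of "Pb i" "card \<circ> F i" "Q i"] FQ by auto
        have a4: "1 \<le> card (F i (xs i))" using F1 PbU h by blast
        have "real (card (Pb i) * card (F i (xs i))) \<le> real (card (Xb i))" using a3 by linarith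
        moreover have "real (card (Xb i)) \<le> real (card (Pb i) * Q i)" using a5 by linarith
        ultimately show "L i = ln (real (Q i)) \<and> 1 < real (Q i) \<and> L i > 0 \<and> 1 \<le> real (card (Pb i)) \<and>
          1 \<le> real (card (F i (xs i))) \<and> real (card (Pb i)) * real (card (F i (xs i))) \<le> real (card (Xb i)) \<and>
          real (card (Xb i)) \<le> real (card (Pb i)) * real (Q i)"
          using a1 a4 Lpos h by (simp add: L_def good_def)
      qed
    qed
    then show ?thesis using kb rtPb by auto
  qed
  have upX: "up_nonempty U M p (Suc n) b \<longleftrightarrow> eventually (\<lambda>i. X i \<noteq> {}) U" by (simp add: up_nonempty_def X_def)
  have upS: "up_nonempty U M (projfm N (sfm N p)) n b \<longleftrightarrow> eventually (\<lambda>i. Ps i \<noteq> {}) U"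
    by (simp add: up_nonempty_def Ps_def)
  have upB: "up_nonempty U M (projfm N (bfm N p)) n b \<longleftrightarrow> eventually (\<lambda>i. Pb i \<noteq> {}) U"
    by (simp add: up_nonempty_def Pb_def)
  have Lt: "filterlim L at_top U" unfolding L_def Q_def by (rule Ltop)
  have XsPs: "Xs i \<noteq> {} \<longleftrightarrow> Ps i \<noteq> {}" if g: "good i" for i
  proof
    assume "Xs i \<noteq> {}"
    then have "card (Xs i) \<noteq> 0" using finPs(3)[of i] by simp
    moreover have "card (Xs i) = (\<Sum>x'\<in>Ps i. card (F i x'))" using G[OF g] by blast
    ultimately show "Ps i \<noteq> {}" by (metis sum.empty)
  next
    assume ne: "Ps i \<noteq> {}"
    have Gs: "card (Xs i) = (\<Sum>x'\<in>Ps i. card (F i x'))" using G[OF g] by blast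
    have "card (Ps i) \<le> card (Xs i)" unfolding Gs by (rule sumge) (use PsU[OF g] in blast)
    moreover have "card (Ps i) > 0" using ne finPs(1)[of i] by (simp add: card_gt_0_iff)
    ultimately show "Xs i \<noteq> {}" by auto
  qed
  have XbPb: "Xb i \<noteq> {} \<longleftrightarrow> Pb i \<noteq> {}" if g: "good i" for i
  proof
    assume "Xb i \<noteq> {}"
    then have "card (Xb i) \<noteq> 0" using finPs(4)[of i] by simp
    moreover have "card (Xb i) = (\<Sum>x'\<in>Pb i. card (F i x'))" using G[OF g] by blast
    ultimately show "Pb i \<noteq> {}" by (metis sum.empty)
  next
    assume ne: "Pb i \<noteq> {}"
    have Gs: "card (Xb i) = (\<Sum>x'\<in>Pb i. card (F i x'))" using G[OF g] by blast
    have "card (Pb i) \<le> card (Xb i)" unfolding Gs by (rule sumge) (use PbU[OF g] in blast)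
    moreover have "card (Pb i) > 0" using ne finPs(2)[of i] by (simp add: card_gt_0_iff)
    ultimately show "Xb i \<noteq> {}" by auto
  qed
  have XX: "card (X i) = card (Xs i) + card (Xb i)" if "good i" for i using G[OF that] by blast
  have Xne: "X i \<noteq> {} \<longleftrightarrow> Xs i \<noteq> {} \<or> Xb i \<noteq> {}" if g: "good i" for i
  proof -
    have a: "X i = {} \<longleftrightarrow> card (X i) = 0" using finPs(5)[of i] by simp
    have b: "Xs i = {} \<longleftrightarrow> card (Xs i) = 0" using finPs(3)[of i] by simp
    have c: "Xb i = {} \<longleftrightarrow> card (Xb i) = 0" using finPs(4)[of i] by simp
    show ?thesis using a b c XX[OF g] by linarith
  qed
  have c1: "1 \<le> real (card A)" if "A \<noteq> {}" "finite A" for A :: "'a list set"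
    using that by (simp add: Suc_le_eq card_gt_0_iff)
  have uc: "eventually P U \<or> eventually (\<lambda>i. \<not> P i) U" for P using ultra by (simp add: ultrafilter_def)
  have main: "(up_nonempty U M p (Suc n) b \<longrightarrow> (\<exists>k\<le>Suc n. (rt M p (Suc n) b \<longlongrightarrow> real k) U)) \<and>
         delta U M p (Suc n) b = max (delta U M (projfm N (sfm N p)) n b) (delta U M (projfm N (bfm N p)) n b + 1)"
  proof (cases "eventually (\<lambda>i. Ps i \<noteq> {}) U")
    case es: True
    obtain ks where ks: "ks \<le> n" "((\<lambda>i. ln (real (card (Xs i))) / L i) \<longlongrightarrow> real ks) U"
      "((\<lambda>i. ln (real (card (Ps i))) / L i) \<longlongrightarrow> real ks) U" using PS[OF es] by blast
    have dS: "delta U M (projfm N (sfm N p)) n b = ereal (real ks)"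
      by (rule delta_val) (use upS es ks(3) rtPs in auto)
    have neX: "eventually (\<lambda>i. X i \<noteq> {}) U"
      by (rule eventually_mono[OF eventually_conj[OF evg es]]) (use XsPs Xne in blast)
    show ?thesis
    proof (cases "eventually (\<lambda>i. Pb i \<noteq> {}) U")
      case eb: True
      obtain kb where kb: "kb \<le> n" "((\<lambda>i. ln (real (card (Xb i))) / L i) \<longlongrightarrow> real kb + 1) U"
        "((\<lambda>i. ln (real (card (Pb i))) / L i) \<longlongrightarrow> real kb) U" using PB[OF eb] by blast
      have dB: "delta U M (projfm N (bfm N p)) n b = ereal (real kb)"
        by (rule delta_val) (use upB eb kb(3) rtPb in auto)
      have tX: "((\<lambda>i. ln (real (card (X i))) / L i) \<longlongrightarrow> max (real ks) (real kb + 1)) U"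
      proof (rule AL3[OF Lt _ ks(2) kb(2)])
        show "eventually (\<lambda>i. L i > 0 \<and> 1 \<le> real (card (Xs i)) \<and> 1 \<le> real (card (Xb i)) \<and>
            real (card (X i)) = real (card (Xs i)) + real (card (Xb i))) U"
        proof (rule eventually_mono[OF eventually_conj[OF evg eventually_conj[OF es eb]]])
          fix i assume h: "good i \<and> Ps i \<noteq> {} \<and> Pb i \<noteq> {}"
          have g: "good i" using h by blast
          have "Xs i \<noteq> {}" using XsPs[OF g] h by blast
          then have 1: "1 \<le> real (card (Xs i))" using c1 finPs(3) by blast
          have "Xb i \<noteq> {}" using XbPb[OF g] h by blast
          then have 2: "1 \<le> real (card (Xb i))" using c1 finPs(4) by blast
          have 3: "real (card (X i)) = real (card (Xs i)) + real (card (Xb i))" using XX[OF g] by simp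
          show "L i > 0 \<and> 1 \<le> real (card (Xs i)) \<and> 1 \<le> real (card (Xb i)) \<and>
            real (card (X i)) = real (card (Xs i)) + real (card (Xb i))"
            using Lpos[OF g] 1 2 3 by blast
        qed
      qed
      have kk: "real (max ks (Suc kb)) = max (real ks) (real kb + 1)" by simp
      have dX: "delta U M p (Suc n) b = ereal (max (real ks) (real kb + 1))"
        by (rule delta_val) (use upX neX tX rtX in auto)
      show ?thesis
      proof
        show "up_nonempty U M p (Suc n) b \<longrightarrow> (\<exists>k\<le>Suc n. (rt M p (Suc n) b \<longlongrightarrow> real k) U)"
          using tX kk ks(1) kb(1) rtX by (intro impI exI[of _ "max ks (Suc kb)"]) auto
        show "delta U M p (Suc n) b = max (delta U M (projfm N (sfm N p)) n b) (delta U M (projfm N (bfm N p)) n b + 1)"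
          unfolding dX dS dB by simp
      qed
    next
      case False
      then have eb: "eventually (\<lambda>i. Pb i = {}) U" using uc[of "\<lambda>i. Pb i \<noteq> {}"] by auto
      have dB: "delta U M (projfm N (bfm N p)) n b = -\<infinity>"
        by (rule delta_ninf) (use upB not_ev_empty[OF eb] in auto)
      have eqc: "eventually (\<lambda>i. ln (real (card (Xs i))) / L i = ln (real (card (X i))) / L i) U"
      proof (rule eventually_mono[OF eventually_conj[OF evg eb]])
        fix i assume h: "good i \<and> Pb i = {}"
        then have "Xb i = {}" using XbPb by blast
        then have "card (X i) = card (Xs i)" using XX h by simp
        then show "ln (real (card (Xs i))) / L i = ln (real (card (X i))) / L i" by simp
      qed
      have tX: "((\<lambda>i. ln (real (card (X i))) / L i) \<longlongrightarrow> real ks) U"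
        using ks(2) tendsto_cong[OF eqc] by blast
      have dX: "delta U M p (Suc n) b = ereal (real ks)"
        by (rule delta_val) (use upX neX tX rtX in auto)
      show ?thesis
      proof
        show "up_nonempty U M p (Suc n) b \<longrightarrow> (\<exists>k\<le>Suc n. (rt M p (Suc n) b \<longlongrightarrow> real k) U)"
          using tX ks(1) rtX by (intro impI exI[of _ ks]) auto
        show "delta U M p (Suc n) b = max (delta U M (projfm N (sfm N p)) n b) (delta U M (projfm N (bfm N p)) n b + 1)"
          unfolding dX dS dB by simp
      qed
    qed
  next
    case False
    then have es: "eventually (\<lambda>i. Ps i = {}) U" using uc[of "\<lambda>i. Ps i \<noteq> {}"] by auto
    have dS: "delta U M (projfm N (sfm N p)) n b = -\<infinity>"
      by (rule delta_ninf) (use upS not_ev_empty[OF es] in auto)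
    show ?thesis
    proof (cases "eventually (\<lambda>i. Pb i \<noteq> {}) U")
      case eb: True
      obtain kb where kb: "kb \<le> n" "((\<lambda>i. ln (real (card (Xb i))) / L i) \<longlongrightarrow> real kb + 1) U"
        "((\<lambda>i. ln (real (card (Pb i))) / L i) \<longlongrightarrow> real kb) U" using PB[OF eb] by blast
      have dB: "delta U M (projfm N (bfm N p)) n b = ereal (real kb)"
        by (rule delta_val) (use upB eb kb(3) rtPb in auto)
      have neX: "eventually (\<lambda>i. X i \<noteq> {}) U"
        by (rule eventually_mono[OF eventually_conj[OF evg eb]]) (use XbPb Xne in blast)
      have eqc: "eventually (\<lambda>i. ln (real (card (Xb i))) / L i = ln (real (card (X i))) / L i) U"
      proof (rule eventually_mono[OF eventually_conj[OF evg es]])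
        fix i assume h: "good i \<and> Ps i = {}"
        then have "Xs i = {}" using XsPs by blast
        then have "card (X i) = card (Xb i)" using XX h by simp
        then show "ln (real (card (Xb i))) / L i = ln (real (card (X i))) / L i" by simp
      qed
      have tX: "((\<lambda>i. ln (real (card (X i))) / L i) \<longlongrightarrow> real kb + 1) U"
        using kb(2) tendsto_cong[OF eqc] by blast
      have dX: "delta U M p (Suc n) b = ereal (real kb + 1)"
        by (rule delta_val) (use upX neX tX rtX in auto)
      show ?thesis
      proof
        show "up_nonempty U M p (Suc n) b \<longrightarrow> (\<exists>k\<le>Suc n. (rt M p (Suc n) b \<longlongrightarrow> real k) U)"
          using tX kb(1) rtX by (intro impI exI[of _ "Suc kb"]) (auto simp: add.commute)
        show "delta U M p (Suc n) b = max (delta U M (projfm N (sfm N p)) n b) (delta U M (projfm N (bfm N p)) n b + 1)"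
          unfolding dX dS dB by simp
      qed
    next
      case False
      then have eb: "eventually (\<lambda>i. Pb i = {}) U" using uc[of "\<lambda>i. Pb i \<noteq> {}"] by auto
      have dB: "delta U M (projfm N (bfm N p)) n b = -\<infinity>"
        by (rule delta_ninf) (use upB not_ev_empty[OF eb] in auto)
      have eX: "eventually (\<lambda>i. X i = {}) U"
        by (rule eventually_mono[OF eventually_conj[OF evg eventually_conj[OF es eb]]]) (use Xne XsPs XbPb in blast)
      have nX: "\<not> up_nonempty U M p (Suc n) b" using upX not_ev_empty[OF eX] by simp
      show ?thesis using nX delta_ninf[OF nX] dS dB by simp
    qed
  qed
  then show ?thesis unfolding N_def .
qed


lemma ereal_plus1_le: "(d + 1 \<le> ereal r) \<longleftrightarrow> (d \<le> ereal (r - 1))"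
  by (cases d) auto

lemma mainP: "\<forall>m p. is_fm arf arr (n + m) p \<longrightarrow>
   (\<forall>b. up_tuple U M m b \<longrightarrow> up_nonempty U M p n b \<longrightarrow> (\<exists>k\<le>n. (rt M p n b \<longlongrightarrow> real k) U)) \<and>
   (\<forall>r::real. \<exists>chi. is_fm arf arr m chi \<and> (\<forall>b. up_tuple U M m b \<longrightarrow> (up_sat U M chi b \<longleftrightarrow> delta U M p n b \<le> ereal r)))"
proof (induction n)
  case 0
  show ?case
  proof (intro allI impI conjI)
    fix m p assume pf: "is_fm arf arr (0 + m) p"
    have R0: "realis (M i) p 0 (b i) = (if sat (M i) (asg (b i)) p then {[]} else {})" for i b
      by (auto simp: realis_def)
    have une: "up_nonempty U M p 0 b \<longleftrightarrow> up_sat U M p b" for b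
      by (simp add: up_nonempty_def up_sat_def R0)
    have A: "(rt M p 0 b \<longlongrightarrow> 0) U" if "up_nonempty U M p 0 b" for b
    proof -
      have "eventually (\<lambda>i. sat (M i) (asg (b i)) p) U" using that unfolding une up_sat_def .
      then have ev: "eventually (\<lambda>i. rt M p 0 b i = 0) U"
        by (rule eventually_mono) (simp add: rt_def R0)
      show ?thesis by (subst tendsto_cong[OF ev]) simp
    qed
    show "\<exists>k\<le>0. (rt M p 0 b \<longlongrightarrow> real k) U" if "up_tuple U M m b" "up_nonempty U M p 0 b" for b
      using A[OF that(2)] by auto
    have dv: "delta U M p 0 b = (if up_sat U M p b then 0 else -\<infinity>)" for b
    proof (cases "up_sat U M p b")
      case True
      then have "up_nonempty U M p 0 b" using une by simp
      then have "delta U M p 0 b = ereal 0" using delta_val A by blast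
      then show ?thesis using True by (simp add: zero_ereal_def)
    next
      case False
      then have "\<not> up_nonempty U M p 0 b" using une by simp
      then show ?thesis using False delta_ninf by simp
    qed
    show "\<exists>chi. is_fm arf arr m chi \<and> (\<forall>b. up_tuple U M m b \<longrightarrow> (up_sat U M chi b \<longleftrightarrow> delta U M p 0 b \<le> ereal r))"
      for r :: real
      proof (cases "0 \<le> r")
        case True
        define T where "T = (Eq (Fn Zero []) (Fn Zero []) :: ('f, 'r) fm)"
        have "is_fm arf arr m T" by (simp add: is_fm_def T_def)
        moreover have "up_sat U M T b" for b by (simp add: up_sat_def T_def)
        moreover have "delta U M p 0 b \<le> ereal r" for b using dv True by (simp add: zero_ereal_def)
        ultimately show ?thesis by blast
      next
        case False
        have "is_fm arf arr m (Neg p)" using pf by (simp add: is_fm_def)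
        moreover have "up_sat U M (Neg p) b \<longleftrightarrow> delta U M p 0 b \<le> ereal r" for b
        proof -
          have "up_sat U M (Neg p) b \<longleftrightarrow> \<not> up_sat U M p b"
            unfolding up_sat_def sat.simps using ultra_not[OF ultra] by blast
          then show ?thesis using dv False by (simp add: zero_ereal_def)
        qed
        ultimately show ?thesis by blast
      qed
  qed
next
  case (Suc n)
  show ?case
  proof (intro allI impI conjI)
    fix m p assume pf: "is_fm arf arr (Suc n + m) p"
    have pf': "is_fm arf arr (Suc (n + m)) p" using pf by simp
    have fs: "is_fm arf arr (n + m) (projfm (n + m) (sfm (n + m) p))" by (rule is_fm_projfm[OF is_fm_sfm[OF pf']])
    have fb: "is_fm arf arr (n + m) (projfm (n + m) (bfm (n + m) p))" by (rule is_fm_projfm[OF is_fm_bfm[OF pf']])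
    have IHs: "(\<forall>b. up_tuple U M m b \<longrightarrow> up_nonempty U M (projfm (n + m) (sfm (n + m) p)) n b \<longrightarrow>
                 (\<exists>k\<le>n. (rt M (projfm (n + m) (sfm (n + m) p)) n b \<longlongrightarrow> real k) U)) \<and>
       (\<forall>r::real. \<exists>chi. is_fm arf arr m chi \<and> (\<forall>b. up_tuple U M m b \<longrightarrow>
                 (up_sat U M chi b \<longleftrightarrow> delta U M (projfm (n + m) (sfm (n + m) p)) n b \<le> ereal r)))"
      using Suc.IH fs by blast
    have IHb: "(\<forall>b. up_tuple U M m b \<longrightarrow> up_nonempty U M (projfm (n + m) (bfm (n + m) p)) n b \<longrightarrow>
                 (\<exists>k\<le>n. (rt M (projfm (n + m) (bfm (n + m) p)) n b \<longlongrightarrow> real k) U)) \<and>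
       (\<forall>r::real. \<exists>chi. is_fm arf arr m chi \<and> (\<forall>b. up_tuple U M m b \<longrightarrow>
                 (up_sat U M chi b \<longleftrightarrow> delta U M (projfm (n + m) (bfm (n + m) p)) n b \<le> ereal r)))"
      using Suc.IH fb by blast
    have st: "(up_nonempty U M p (Suc n) b \<longrightarrow> (\<exists>k\<le>Suc n. (rt M p (Suc n) b \<longlongrightarrow> real k) U)) \<and>
         delta U M p (Suc n) b = max (delta U M (projfm (n+m) (sfm (n+m) p)) n b) (delta U M (projfm (n+m) (bfm (n+m) p)) n b + 1)"
      if b: "up_tuple U M m b" for b
    proof (rule step[OF pf' _ _ b])
      show "\<And>b. up_tuple U M m b \<Longrightarrow> up_nonempty U M (projfm (n+m) (sfm (n+m) p)) n b \<Longrightarrow>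
               \<exists>k\<le>n. (rt M (projfm (n+m) (sfm (n+m) p)) n b \<longlongrightarrow> real k) U" using IHs by blast
      show "\<And>b. up_tuple U M m b \<Longrightarrow> up_nonempty U M (projfm (n+m) (bfm (n+m) p)) n b \<Longrightarrow>
               \<exists>k\<le>n. (rt M (projfm (n+m) (bfm (n+m) p)) n b \<longlongrightarrow> real k) U" using IHb by blast
    qed
    show "\<exists>k\<le>Suc n. (rt M p (Suc n) b \<longlongrightarrow> real k) U" if "up_tuple U M m b" "up_nonempty U M p (Suc n) b" for b
      using st[OF that(1)] that(2) by blast
    show "\<exists>chi. is_fm arf arr m chi \<and> (\<forall>b. up_tuple U M m b \<longrightarrow> (up_sat U M chi b \<longleftrightarrow> delta U M p (Suc n) b \<le> ereal r))"
      for r :: real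
    proof -
      obtain chis where cs: "is_fm arf arr m chis" "\<forall>b. up_tuple U M m b \<longrightarrow>
          (up_sat U M chis b \<longleftrightarrow> delta U M (projfm (n + m) (sfm (n + m) p)) n b \<le> ereal r)"
        using IHs by blast
      obtain chib where cb: "is_fm arf arr m chib" "\<forall>b. up_tuple U M m b \<longrightarrow>
          (up_sat U M chib b \<longleftrightarrow> delta U M (projfm (n + m) (bfm (n + m) p)) n b \<le> ereal (r - 1))"
        using IHb by blast
      have "is_fm arf arr m (Conj chis chib)" using cs(1) cb(1) by (auto simp: is_fm_def)
      moreover have "up_sat U M (Conj chis chib) b \<longleftrightarrow> delta U M p (Suc n) b \<le> ereal r" if b: "up_tuple U M m b" for b
      proof -
        have "up_sat U M (Conj chis chib) b \<longleftrightarrow> up_sat U M chis b \<and> up_sat U M chib b"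
          by (simp add: up_sat_def eventually_conj_iff)
        also have "\<dots> \<longleftrightarrow> delta U M (projfm (n + m) (sfm (n + m) p)) n b \<le> ereal r \<and>
               delta U M (projfm (n + m) (bfm (n + m) p)) n b \<le> ereal (r - 1)" using cs(2) cb(2) b by blast
        also have "\<dots> \<longleftrightarrow> max (delta U M (projfm (n+m) (sfm (n+m) p)) n b) (delta U M (projfm (n+m) (bfm (n+m) p)) n b + 1) \<le> ereal r"
          by (simp add: ereal_plus1_le)
        also have "\<dots> \<longleftrightarrow> delta U M p (Suc n) b \<le> ereal r" using st[OF b] by simp
        finally show ?thesis .
      qed
      ultimately show "\<exists>chi. is_fm arf arr m chi \<and> (\<forall>b. up_tuple U M m b \<longrightarrow> (up_sat U M chi b \<longleftrightarrow> delta U M p (Suc n) b \<le> ereal r))"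
        by blast
    qed
  qed
qed

lemma final_res:
  "delta_definable arf arr U M \<and>
   (\<forall>n m psi c. is_fm arf arr (n + m) psi \<longrightarrow> up_tuple U M m c \<longrightarrow>
      up_nonempty U M psi n c \<longrightarrow> delta U M psi n c \<in> {ereal (real k) | k. k \<le> n})"
proof -
  have dk: "\<exists>k\<le>n. delta U M psi n c = ereal (real k)"
    if h: "is_fm arf arr (n + m) psi" "up_tuple U M m c" "up_nonempty U M psi n c" for n m psi c
  proof -
    obtain k where "k \<le> n" "(rt M psi n c \<longlongrightarrow> real k) U" using mainP[of n] h by blast
    then show ?thesis using delta_val[OF h(3)] by blast
  qed
  show ?thesis
  proof
    show "delta_definable arf arr U M"
      unfolding delta_definable_def
    proof (intro allI impI conjI)
      fix n m phi assume pf: "is_fm arf arr (n + m) phi"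
      fix r1 r2 :: real assume lt: "r1 < r2"
      obtain chi where chi: "is_fm arf arr m chi"
          "\<forall>b. up_tuple U M m b \<longrightarrow> (up_sat U M chi b \<longleftrightarrow> delta U M phi n b \<le> ereal r1)"
        using mainP[of n] pf by blast
      have "delta U M phi n b < ereal r2" if "delta U M phi n b \<le> ereal r1" for b
        using le_less_trans[OF that, of "ereal r2"] lt by simp
      then show "\<exists>chi. is_fm arf arr m chi \<and> (\<forall>b. up_tuple U M m b \<longrightarrow>
          (delta U M phi n b \<le> ereal r1 \<longrightarrow> up_sat U M chi b) \<and> (up_sat U M chi b \<longrightarrow> delta U M phi n b < ereal r2))"
        using chi by blast
    next
      fix n m phi assume pf: "is_fm arf arr (n + m) phi"
      show "finite {delta U M phi n b | b. up_tuple U M m b}"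
      proof (rule finite_subset)
        show "{delta U M phi n b | b. up_tuple U M m b} \<subseteq> insert (-\<infinity>) ((\<lambda>k. ereal (real k)) ` {..n})"
        proof
          fix x assume "x \<in> {delta U M phi n b | b. up_tuple U M m b}"
          then obtain b where b: "up_tuple U M m b" "x = delta U M phi n b" by blast
          show "x \<in> insert (-\<infinity>) ((\<lambda>k. ereal (real k)) ` {..n})"
          proof (cases "up_nonempty U M phi n b")
            case True
            then show ?thesis using dk[OF pf b(1) True] b(2) by auto
          next
            case False
            then show ?thesis using delta_ninf b(2) by simp
          qed
        qed
        show "finite (insert (-\<infinity>) ((\<lambda>k. ereal (real k)) ` {..n}))" by simp
      qed
    qed
    show "\<forall>n m psi c. is_fm arf arr (n + m) psi \<longrightarrow> up_tuple U M m c \<longrightarrow>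
      up_nonempty U M psi n c \<longrightarrow> delta U M psi n c \<in> {ereal (real k) | k. k \<le> n}"
      using dk by blast
  qed
qed

end

theorem lemma2p13:
  fixes arf :: "'f \<Rightarrow> nat" and arr :: "'r \<Rightarrow> nat"
    and U :: "'i filter" and M :: "'i \<Rightarrow> ('a, 'f, 'r) struct"
  assumes ultra: "ultrafilter U"
    and wf: "\<And>i. wf_struct arf (M i)"
    and fin: "\<And>i. finite (univ (M i))"
    and infinite: "\<And>k::nat. eventually (\<lambda>i. card (univ (M i)) > k) U"
    and is_field: "eventually (\<lambda>i. field (ring_reduct (M i))) U"
    and hyp: "\<And>m phi b. is_fm arf arr (1 + m) phi \<Longrightarrow> up_tuple U M m b \<Longrightarrow>
               up_nonempty U M phi 1 b \<Longrightarrow> delta U M phi 1 b \<in> {0, 1}"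
  shows "delta_definable arf arr U M \<and>
         (\<forall>n m psi c. is_fm arf arr (n + m) psi \<longrightarrow> up_tuple U M m c \<longrightarrow>
            up_nonempty U M psi n c \<longrightarrow> delta U M psi n c \<in> {ereal (real k) | k. k \<le> n})"
  by (rule final_res[OF ultra wf fin infinite is_field hyp])


end
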